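(* Let $D_1$ be a full $K$-powered field and let $D_2$ and $D_3$ be powers-algebraic extensions of $D_1$. Then the free amalgam $D_4$ of $D_2$ and $D_3$ over $D_1$ is a powers-algebraic extension of $D_1$.
   Context: $K$ is a field of characteristic $0$. A partial $K$-powered field is $(D,V,\exp,F)$: $V$ a $K$-vector space, $D\subseteq V$ a $\mathbb{Q}$-subspace with $\langle D\rangle_K=V$, $F$ a field of characteristic 0, $\exp:(D,+)\to(F^\times,\cdot)$ a homomorphism whose image generates $F$. It is a full $K$-powered field if $D=V$, $\exp$ is surjective onto $F^\times$ and $F$ is algebraically closed. Extensions $D_1\le D_2$: $K$-linear embedding $V_1\to V_2$ mapping $D_1$ into $D_2$ and field embedding $F_1\to F_2$ commuting with $\exp$; kernel-preserving if $\ker\exp$ does not grow. Predimension $\delta(A/B)=\mathrm{ldim}_K(A/B)+\mathrm{td}(\exp(A)/\exp(B))-\mathrm{ldim}_\mathbb{Q}(A/B)$ for $\mathrm{ldim}_\mathbb{Q}(A/B)<\infty$ ($\mathrm{ldim}_K(A/B)=\dim_K\langle A\cup B\rangle_K/\langle B\rangle_K$, similarly over $\mathbb{Q}$; td is transcendence degree). $D_1\triangleleft D_2$ (strong): kernel-preserving and $\delta(z/D_1)\ge0$ for all finite tuples $z$ in $D_2$. A strong extension $D_1\triangleleft D_2$ is powers-algebraic if every finite tuple $z$ in $D_2$ extends to a finite tuple $z'$ in $D_2$ with $\delta(z'/D_1)=0$. Free amalgam of $D_2,D_3$ over the full $D_1$: $V_4=V_2\oplus_{V_1}V_3$, $D_4=D_2+D_3$,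 $F_4$ the compositum of $F_2,F_3$ with $F_2,F_3$ linearly disjoint over $F_1$, $\exp(z_2+z_3)=\exp(z_2)\exp(z_3)$. *)

theory Defs
  imports Main "HOL-Computational_Algebra.Polynomial"
begin

text \<open>All K-vector spaces considered
live inside one ambient K-vector space 'v with scalar multiplication scale (an
assumption vector_space scale), all fields F live inside one ambient field 'f of
characteristic 0, and there is one ambient map ex :: 'v => 'f. A partial K-powered field
is then a triple (V, D, F) of subsets; extensions are inclusions (the K-linear and field
embeddings being the identity and commuting with ex automatically).\<close>

definition qscale :: "('k::field_char_0 \<Rightarrow> 'v \<Rightarrow> 'v) \<Rightarrow> rat \<Rightarrow> 'v \<Rightarrow> 'v" where
  "qscale scale q x = scale (of_rat q) x"

definition subfield :: "'f::field set \<Rightarrow> bool" where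
  "subfield F \<longleftrightarrow> 0 \<in> F \<and> 1 \<in> F \<and>
     (\<forall>x\<in>F. \<forall>y\<in>F. x + y \<in> F \<and> x * y \<in> F) \<and>
     (\<forall>x\<in>F. - x \<in> F) \<and> (\<forall>x\<in>F. x \<noteq> 0 \<longrightarrow> inverse x \<in> F)"

definition gen_field :: "'f::field set \<Rightarrow> 'f set" where
  "gen_field S = \<Inter> {F. subfield F \<and> S \<subseteq> F}"

definition algebraic_over :: "'f::field set \<Rightarrow> 'f \<Rightarrow> bool" where
  "algebraic_over L a \<longleftrightarrow> (\<exists>p. p \<noteq> 0 \<and> (\<forall>i. coeff p i \<in> L) \<and> poly p a = 0)"

definition alg_closed_field :: "'f::field set \<Rightarrow> bool" where
  "alg_closed_field F \<longleftrightarrow> subfield F \<and>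
     (\<forall>p. (\<forall>i. coeff p i \<in> F) \<and> degree p > 0 \<longrightarrow> (\<exists>x\<in>F. poly p x = 0))"

definition lin_indep_over :: "'f::field set \<Rightarrow> 'f set \<Rightarrow> bool" where
  "lin_indep_over L T \<longleftrightarrow>
     (\<forall>S c. finite S \<longrightarrow> S \<subseteq> T \<longrightarrow> (\<forall>t\<in>S. c t \<in> L) \<longrightarrow> (\<Sum>t\<in>S. c t * t) = 0
        \<longrightarrow> (\<forall>t\<in>S. c t = 0))"

definition linearly_disjoint :: "'f::field set \<Rightarrow> 'f set \<Rightarrow> 'f set \<Rightarrow> bool" where
  "linearly_disjoint F1 F2 F3 \<longleftrightarrow>
     (\<forall>T. finite T \<longrightarrow> T \<subseteq> F2 \<longrightarrow> lin_indep_over F1 T \<longrightarrow> lin_indep_over F3 T)"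

text \<open>ldim_K(A/B) = dim_K (span(A \<union> B) / span B): the least size of a finite C \<subseteq> A with
A \<subseteq> span (C \<union> B).\<close>
definition ldim :: "('s::comm_ring_1 \<Rightarrow> 'v::ab_group_add \<Rightarrow> 'v) \<Rightarrow> 'v set \<Rightarrow> 'v set \<Rightarrow> nat" where
  "ldim sc A B = (LEAST n. \<exists>C. C \<subseteq> A \<and> finite C \<and> card C = n \<and> A \<subseteq> module.span sc (C \<union> B))"

text \<open>td(A/B): transcendence degree of the field generated by A \<union> B over the field
generated by B, as the size of a least C \<subseteq> A over which (together with B) A is algebraic.\<close>
definition tdeg :: "'f::field set \<Rightarrow> 'f set \<Rightarrow> nat" where
  "tdeg A B = (LEAST n. \<exists>C. C \<subseteq> A \<and> finite C \<and> card C = n \<and>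
                   (\<forall>a\<in>A. algebraic_over (gen_field (B \<union> C)) a))"

definition predim :: "('k::field_char_0 \<Rightarrow> 'v::ab_group_add \<Rightarrow> 'v) \<Rightarrow> ('v \<Rightarrow> 'f::field)
    \<Rightarrow> 'v set \<Rightarrow> 'v set \<Rightarrow> int" where
  "predim scale ex A B = int (ldim scale A B) + int (tdeg (ex ` A) (ex ` B))
                          - int (ldim (qscale scale) A B)"

definition pkpf :: "('k::field_char_0 \<Rightarrow> 'v::ab_group_add \<Rightarrow> 'v) \<Rightarrow> ('v \<Rightarrow> 'f::field_char_0)
    \<Rightarrow> 'v set \<Rightarrow> 'v set \<Rightarrow> 'f set \<Rightarrow> bool" where
  "pkpf scale ex V D F \<longleftrightarrow>
     module.subspace scale V \<and>
     D \<subseteq> V \<and> module.subspace (qscale scale) D \<and>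
     module.span scale D = V \<and>
     subfield F \<and>
     (\<forall>x\<in>D. ex x \<in> F \<and> ex x \<noteq> 0) \<and>
     (\<forall>x\<in>D. \<forall>y\<in>D. ex (x + y) = ex x * ex y) \<and>
     gen_field (ex ` D) = F"

definition full_kpf :: "('k::field_char_0 \<Rightarrow> 'v::ab_group_add \<Rightarrow> 'v) \<Rightarrow> ('v \<Rightarrow> 'f::field_char_0)
    \<Rightarrow> 'v set \<Rightarrow> 'v set \<Rightarrow> 'f set \<Rightarrow> bool" where
  "full_kpf scale ex V D F \<longleftrightarrow>
     pkpf scale ex V D F \<and> D = V \<and> ex ` D = F - {0} \<and> alg_closed_field F"

definition kpf_ext :: "('k::field_char_0 \<Rightarrow> 'v::ab_group_add \<Rightarrow> 'v) \<Rightarrow> ('v \<Rightarrow> 'f::field_char_0)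
    \<Rightarrow> 'v set \<Rightarrow> 'v set \<Rightarrow> 'f set \<Rightarrow> 'v set \<Rightarrow> 'v set \<Rightarrow> 'f set \<Rightarrow> bool" where
  "kpf_ext scale ex V1 D1 F1 V2 D2 F2 \<longleftrightarrow>
     pkpf scale ex V1 D1 F1 \<and> pkpf scale ex V2 D2 F2 \<and>
     V1 \<subseteq> V2 \<and> D1 \<subseteq> D2 \<and> F1 \<subseteq> F2"

definition kernel_preserving :: "('v \<Rightarrow> 'f::field) \<Rightarrow> 'v set \<Rightarrow> 'v set \<Rightarrow> bool" where
  "kernel_preserving ex D1 D2 \<longleftrightarrow> {x\<in>D2. ex x = 1} \<subseteq> D1"

definition strong_ext :: "('k::field_char_0 \<Rightarrow> 'v::ab_group_add \<Rightarrow> 'v) \<Rightarrow> ('v \<Rightarrow> 'f::field_char_0)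
    \<Rightarrow> 'v set \<Rightarrow> 'v set \<Rightarrow> 'f set \<Rightarrow> 'v set \<Rightarrow> 'v set \<Rightarrow> 'f set \<Rightarrow> bool" where
  "strong_ext scale ex V1 D1 F1 V2 D2 F2 \<longleftrightarrow>
     kpf_ext scale ex V1 D1 F1 V2 D2 F2 \<and> kernel_preserving ex D1 D2 \<and>
     (\<forall>z::'v list. set z \<subseteq> D2 \<longrightarrow> predim scale ex (set z) D1 \<ge> 0)"

definition powers_algebraic_ext :: "('k::field_char_0 \<Rightarrow> 'v::ab_group_add \<Rightarrow> 'v) \<Rightarrow> ('v \<Rightarrow> 'f::field_char_0)
    \<Rightarrow> 'v set \<Rightarrow> 'v set \<Rightarrow> 'f set \<Rightarrow> 'v set \<Rightarrow> 'v set \<Rightarrow> 'f set \<Rightarrow> bool" where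
  "powers_algebraic_ext scale ex V1 D1 F1 V2 D2 F2 \<longleftrightarrow>
     strong_ext scale ex V1 D1 F1 V2 D2 F2 \<and>
     (\<forall>z::'v list. set z \<subseteq> D2 \<longrightarrow>
        (\<exists>w. set w \<subseteq> D2 \<and> predim scale ex (set (z @ w)) D1 = 0))"

definition setsum :: "'v::ab_group_add set \<Rightarrow> 'v set \<Rightarrow> 'v set" where
  "setsum A B = {a + b | a b. a \<in> A \<and> b \<in> B}"

text \<open>(V4,D4,F4) is the free amalgam of (V2,D2,F2) and (V3,D3,F3) over (V1,D1,F1):
V4 = V2 \<oplus>_V1 V3 (internal sum with V2 \<inter> V3 = V1), D4 = D2 + D3, F4 the compositum
of F2 and F3 with F2, F3 linearly disjoint over F1, and ex(z2+z3) = ex z2 * ex z3.\<close>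
definition free_amalgam :: "('k::field_char_0 \<Rightarrow> 'v::ab_group_add \<Rightarrow> 'v) \<Rightarrow> ('v \<Rightarrow> 'f::field_char_0)
    \<Rightarrow> 'v set \<Rightarrow> 'v set \<Rightarrow> 'f set \<Rightarrow> 'v set \<Rightarrow> 'v set \<Rightarrow> 'f set
    \<Rightarrow> 'v set \<Rightarrow> 'v set \<Rightarrow> 'f set \<Rightarrow> 'v set \<Rightarrow> 'v set \<Rightarrow> 'f set \<Rightarrow> bool" where
  "free_amalgam scale ex V1 D1 F1 V2 D2 F2 V3 D3 F3 V4 D4 F4 \<longleftrightarrow>
     V2 \<inter> V3 = V1 \<and> V4 = setsum V2 V3 \<and>
     D4 = setsum D2 D3 \<and>
     linearly_disjoint F1 F2 F3 \<and> F4 = gen_field (F2 \<union> F3) \<and>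
     (\<forall>z2\<in>D2. \<forall>z3\<in>D3. ex (z2 + z3) = ex z2 * ex z3)"

end

theory Submission
  imports Defs "HOL-Algebra.Finite_Extensions"
begin


lemma (in field) alg_trans_list:
  assumes K: "subfield K R" and xs: "set xs \<subseteq> carrier R"
    and alg: "\<And>x. x \<in> set xs \<Longrightarrow> (algebraic over K) x"
    and a: "a \<in> carrier R" and aF: "(algebraic over (finite_extension K xs)) a"
  shows "(algebraic over K) a"
proof -
  let ?F = "finite_extension K xs"
  have F: "subfield ?F R" using finite_extension_is_subfield[OF K xs] alg by auto
  have fdF: "finite_dimension K ?F" using finite_extension_finite_dimension(1)[OF K xs] alg by auto
  have fdS: "finite_dimension ?F (simple_extension ?F a)"
    using finite_dimensionI[OF dimension_simple_extension[OF F a aF]] .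
  have fd: "finite_dimension K (simple_extension ?F a)"
    using telescopic_base_dim(1)[OF K F fdF fdS] .
  have "subring (simple_extension ?F a) R"
    using simple_extension_is_subring[OF subfieldE(1)[OF F] a] .
  moreover have "a \<in> simple_extension ?F a"
    using simple_extension_mem[OF subfieldE(1)[OF F] a] .
  ultimately show ?thesis using finite_dimension_imp_algebraic[OF K _ fd] by blast
qed

lemma (in field) alg_trans:
  assumes K: "subfield K R" and a: "a \<in> carrier R"
    and aM: "(algebraic over {x \<in> carrier R. (algebraic over K) x}) a"
  shows "(algebraic over K) a"
proof -
  let ?M = "{x \<in> carrier R. (algebraic over K) x}"
  have M: "subfield ?M R" using subfield_of_algebraics[OF K] .
  obtain p where p: "p \<in> carrier (?M[X])" "p \<noteq> []" "eval p a = \<zero>"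
    using algebraicE[OF subfieldE(1)[OF M] a aM] by blast
  have setp: "set p \<subseteq> ?M" using p(1) unfolding univ_poly_def polynomial_def by auto
  hence setpc: "set p \<subseteq> carrier R" by auto
  have "set p \<subseteq> finite_extension K p"
    using finite_extension_mem[OF subfieldE(1)[OF K] setpc] .
  hence "p \<in> carrier ((finite_extension K p)[X])"
    using p(1) unfolding univ_poly_def polynomial_def by auto
  hence "(algebraic over (finite_extension K p)) a" using algebraicI p by blast
  thus ?thesis using alg_trans_list[OF K setpc _ a] setp by auto
qed



definition R0 :: "'a::field ring" where
  "R0 = \<lparr>carrier = UNIV, monoid.mult = (\<lambda>x y. x * y), one = 1, ring.zero = 0, add = (\<lambda>x y. x + y)\<rparr>"

lemma R0_simps [simp]: "carrier R0 = UNIV" "monoid.mult R0 = (*)" "one R0 = 1" "ring.zero R0 = 0"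
  "add R0 = (+)"
  by (auto simp: R0_def)

lemma field_R0: "field (R0 :: 'a::field ring)"
proof -
  have "\<exists>y. x + y = 0" for x :: 'a
    using add.right_inverse by blast
  moreover have "x \<noteq> 0 \<Longrightarrow> \<exists>y. x * y = 1" for x :: 'a
    by (rule exI[of _ "inverse x"]) auto
  ultimately show ?thesis
    unfolding R0_def using add.right_inverse
    by unfold_locales (auto simp:algebra_simps Units_def)
qed


interpretation R0: domain "R0 :: 'a::field ring" using field_R0 field.axioms(1) by blast

lemma R0_a_inv [simp]: "a_inv R0 x = - (x::'a::field)"
  by (rule R0.minus_equality) auto

lemma R0_inv [simp]: "(x::'a::field) \<noteq> 0 \<Longrightarrow> m_inv R0 x = inverse x"
  by (rule R0.comm_inv_char) auto

lemma R0_pow [simp]: "x [^]\<^bsub>R0\<^esub> (n::nat) = (x::'a::field) ^ n"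
  by (induction n) auto

lemma R0_eval: "ring.eval R0 q x = poly (Poly (rev q)) (x::'a::field)"
proof (induction q)
  case Nil then show ?case by (simp add: R0.eval.simps)
next
  case (Cons c q)
  show ?case using Cons by (simp add: R0.eval.simps Poly_append poly_monom algebra_simps)
qed

lemma subfield_R0_iff: "Defs.subfield L \<longleftrightarrow> Subrings.subfield L (R0::'a::field ring)"
proof
  assume L: "Defs.subfield L"
  show "Subrings.subfield L R0"
  proof (rule field.subfieldI'[OF field_R0, OF R0.subringI])
    show "L \<subseteq> carrier R0" by simp
    show "\<one>\<^bsub>R0\<^esub> \<in> L" using L by (simp add: Defs.subfield_def)
    show "\<ominus>\<^bsub>R0\<^esub> h \<in> L" if "h \<in> L" for h using L that by (simp add: Defs.subfield_def)
    show "h1 \<otimes>\<^bsub>R0\<^esub> h2 \<in> L" "h1 \<oplus>\<^bsub>R0\<^esub> h2 \<in> L" if "h1 \<in> L" "h2 \<in> L" for h1 h2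
      using L that by (auto simp add: Defs.subfield_def)
    show "inv\<^bsub>R0\<^esub> k \<in> L" if "k \<in> L - {\<zero>\<^bsub>R0\<^esub>}" for k
      using L that by (auto simp add: Defs.subfield_def)
  qed
next
  assume L: "Subrings.subfield L (R0::'a::field ring)"
  have sr: "subring L R0" using L subfieldE(1) by blast
  show "Defs.subfield L"
    unfolding Defs.subfield_def
  proof (intro conjI ballI impI)
    show "0 \<in> L" using subringE(2)[OF sr] by simp
    show "1 \<in> L" using subringE(3)[OF sr] by simp
    fix x assume x: "x \<in> L"
    show "- x \<in> L" using subringE(5)[OF sr x] by simp
    { fix y assume y: "y \<in> L"
      show "x + y \<in> L" using subringE(7)[OF sr x y] by simp
      show "x * y \<in> L" using subringE(6)[OF sr x y] by simp }
    assume "x \<noteq> 0"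
    then show "inverse x \<in> L" using R0.subfield_m_inv(1)[OF L, of x] x by simp
  qed
qed

lemma algebraic_over_R0_iff:
  assumes L: "Defs.subfield L"
  shows "algebraic_over L a \<longleftrightarrow> (ring.algebraic R0 over L) (a::'a::field)"
proof
  assume "algebraic_over L a"
  then obtain p where p: "p \<noteq> 0" "\<forall>i. Polynomial.coeff p i \<in> L" "poly p a = 0"
    unfolding algebraic_over_def by blast
  let ?q = "rev (coeffs p)"
  have "?q \<noteq> []" using p(1) by simp
  moreover have "?q \<in> carrier (L[X]\<^bsub>R0\<^esub>)"
  proof -
    have "set ?q \<subseteq> L" using p(2) by (auto simp: coeffs_def)
    moreover have "hd ?q \<noteq> 0" using p(1) by (simp add: hd_rev last_coeffs_eq_coeff_degree)
    ultimately show ?thesis unfolding univ_poly_def polynomial_def by auto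
  qed
  moreover have "ring.eval R0 ?q a = \<zero>\<^bsub>R0\<^esub>" using p(3) by (simp add: R0_eval)
  ultimately show "(ring.algebraic R0 over L) a" using R0.algebraicI by blast
next
  assume alg: "(ring.algebraic R0 over L) a"
  have sr: "subring L R0" using L subfield_R0_iff subfieldE(1) by blast
  obtain q where q: "q \<in> carrier (L[X]\<^bsub>R0\<^esub>)" "q \<noteq> []" "ring.eval R0 q a = \<zero>\<^bsub>R0\<^esub>"
    using R0.algebraicE[OF sr _ alg] by auto
  have sq: "set q \<subseteq> L" "hd q \<noteq> 0" using q(1,2) unfolding univ_poly_def polynomial_def by auto
  let ?p = "Poly (rev q)"
  have "Polynomial.coeff ?p i \<in> L" for i
  proof -
    have "0 \<in> L" using L by (simp add: Defs.subfield_def)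
    then show ?thesis using sq(1) nth_mem[of i "rev q"] by (auto simp: nth_default_def)
  qed
  moreover have "?p \<noteq> 0"
  proof
    assume "?p = 0"
    hence "Polynomial.coeff ?p (length q - 1) = 0" by simp
    moreover have "Polynomial.coeff ?p (length q - 1) = hd q"
      using q(2) by (simp add: nth_default_def rev_nth hd_conv_nth)
    ultimately show False using sq(2) by simp
  qed
  moreover have "poly ?p a = 0" using q(3) by (simp add: R0_eval)
  ultimately show "algebraic_over L a" unfolding algebraic_over_def by blast
qed

lemma algebraic_trans:
  assumes L: "Defs.subfield L" and a: "algebraic_over {x. algebraic_over L x} (a::'a::field)"
  shows "algebraic_over L a"
proof -
  let ?M = "{x. algebraic_over L x}"
  have LR: "Subrings.subfield L R0" using L subfield_R0_iff by blast
  have M: "?M = {x \<in> carrier R0. (ring.algebraic R0 over L) x}"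
    using algebraic_over_R0_iff[OF L] by auto
  have MR: "Subrings.subfield ?M R0" unfolding M using field.subfield_of_algebraics[OF field_R0, OF LR] .
  have "(ring.algebraic R0 over ?M) a" using a algebraic_over_R0_iff MR subfield_R0_iff by blast
  hence "(ring.algebraic R0 over L) a" using field.alg_trans[OF field_R0, OF LR] M by simp
  thus ?thesis using algebraic_over_R0_iff[OF L] by blast
qed

lemma subfield_algebraics:
  assumes L: "Defs.subfield L" shows "Defs.subfield {x. algebraic_over L (x::'a::field)}"
proof -
  have LR: "Subrings.subfield L R0" using L subfield_R0_iff by blast
  have M: "{x. algebraic_over L x} = {x \<in> carrier R0. (ring.algebraic R0 over L) x}"
    using algebraic_over_R0_iff[OF L] by auto
  show ?thesis unfolding M subfield_R0_iff using field.subfield_of_algebraics[OF field_R0, OF LR] .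
qed



definition rk :: "('a set \<Rightarrow> 'a set) \<Rightarrow> 'a set \<Rightarrow> 'a set \<Rightarrow> nat" where
  "rk cl A B = (LEAST n. \<exists>C. C \<subseteq> A \<and> finite C \<and> card C = n \<and> A \<subseteq> cl (C \<union> B))"

definition indep :: "('a set \<Rightarrow> 'a set) \<Rightarrow> 'a set \<Rightarrow> 'a set \<Rightarrow> bool" where
  "indep cl B C \<longleftrightarrow> (\<forall>c\<in>C. c \<notin> cl ((C - {c}) \<union> B))"

locale pregeom =
  fixes cl :: "'a set \<Rightarrow> 'a set"
  assumes cl_mono: "A \<subseteq> B \<Longrightarrow> cl A \<subseteq> cl B"
    and cl_ext: "A \<subseteq> cl A"
    and cl_idem: "cl (cl A) \<subseteq> cl A"
    and cl_exch: "b \<in> cl (insert a C) \<Longrightarrow> b \<notin> cl C \<Longrightarrow> a \<in> cl (insert b C)"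
begin

lemma cl_sub: "A \<subseteq> cl B \<Longrightarrow> cl A \<subseteq> cl B"
  using cl_mono cl_idem by blast

lemma cl_Un_sub: "A \<subseteq> cl B \<Longrightarrow> cl (A \<union> B) \<subseteq> cl B"
  using cl_sub cl_ext by (meson Un_least)

lemma indep_insert:
  assumes I: "indep cl B I" and s: "s \<notin> cl (I \<union> B)"
  shows "indep cl B (insert s I)" "s \<notin> I"
proof -
  show sI: "s \<notin> I" using s cl_ext by blast
  show "indep cl B (insert s I)"
    unfolding indep_def
  proof
    fix c assume c: "c \<in> insert s I"
    show "c \<notin> cl ((insert s I - {c}) \<union> B)"
    proof (cases "c = s")
      case True
      then have "(insert s I - {c}) \<union> B = I \<union> B" using sI by auto
      then show ?thesis using s True by simp
    next
      case False
      then have cI: "c \<in> I" using c by auto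
      have eq: "(insert s I - {c}) \<union> B = insert s ((I - {c}) \<union> B)" using False by auto
      have nc: "c \<notin> cl ((I - {c}) \<union> B)" using I cI unfolding indep_def by auto
      show ?thesis
      proof
        assume "c \<in> cl ((insert s I - {c}) \<union> B)"
        then have "c \<in> cl (insert s ((I - {c}) \<union> B))" using eq by simp
        then have "s \<in> cl (insert c ((I - {c}) \<union> B))" using cl_exch nc by blast
        moreover have "insert c ((I - {c}) \<union> B) = I \<union> B" using cI by auto
        ultimately show False using s by simp
      qed
    qed
  qed
qed

lemma indep_subset: "indep cl B I \<Longrightarrow> J \<subseteq> I \<Longrightarrow> indep cl B J"
proof -
  assume I: "indep cl B I" and J: "J \<subseteq> I"
  show "indep cl B J" unfolding indep_def
  proof
    fix c assume c: "c \<in> J"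
    have "(J - {c}) \<union> B \<subseteq> (I - {c}) \<union> B" using J by blast
    then have "cl ((J - {c}) \<union> B) \<subseteq> cl ((I - {c}) \<union> B)" by (rule cl_mono)
    then show "c \<notin> cl ((J - {c}) \<union> B)" using I c J unfolding indep_def by blast
  qed
qed

lemma steinitz:
  assumes "finite G" "finite I" "indep cl B I" "I \<subseteq> cl (G \<union> B)"
  shows "card I \<le> card G"
  using assms
proof (induction "card (I - G)" arbitrary: I rule: less_induct)
  case less
  show ?case
  proof (cases "I \<subseteq> G")
    case True
    then show ?thesis using card_mono less.prems(1) by blast
  next
    case False
    then obtain i where i: "i \<in> I" "i \<notin> G" by blast
    have ni: "i \<notin> cl ((I - {i}) \<union> B)" using less.prems(3) i unfolding indep_def by auto
    have "\<not> G \<subseteq> cl ((I - {i}) \<union> B)"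
    proof
      assume "G \<subseteq> cl ((I - {i}) \<union> B)"
      moreover have "B \<subseteq> cl ((I - {i}) \<union> B)" using cl_ext by blast
      ultimately have "G \<union> B \<subseteq> cl ((I - {i}) \<union> B)" by blast
      then have "cl (G \<union> B) \<subseteq> cl ((I - {i}) \<union> B)" by (rule cl_sub)
      then show False using ni less.prems(4) i by blast
    qed
    then obtain g where g: "g \<in> G" "g \<notin> cl ((I - {i}) \<union> B)" by blast
    have ind': "indep cl B (I - {i})" using indep_subset less.prems(3) by blast
    have I': "indep cl B (insert g (I - {i}))" "g \<notin> I - {i}"
      using indep_insert[OF ind' g(2)] by auto
    have gI: "g \<notin> I" using I'(2) g i by auto
    have sub: "insert g (I - {i}) \<subseteq> cl (G \<union> B)" using less.prems(4) g(1) cl_ext by blast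
    have lt: "card (insert g (I - {i}) - G) < card (I - G)"
    proof -
      have "insert g (I - {i}) - G = (I - G) - {i}" using g(1) by auto
      moreover have "i \<in> I - G" using i by blast
      moreover have "finite (I - G)" using less.prems(2) by blast
      ultimately show ?thesis by (metis card_Diff1_less)
    qed
    have "card (insert g (I - {i})) \<le> card G"
      using less.hyps[OF lt less.prems(1) _ I'(1) sub] less.prems(2) by simp
    moreover have "card (insert g (I - {i})) = card I"
    proof -
      have "card I > 0" using i less.prems(2) card_gt_0_iff by blast
      then show ?thesis using gI i less.prems(2) by (simp add: card_insert_if)
    qed
    ultimately show ?thesis by simp
  qed
qed

lemma rk_le: "C \<subseteq> A \<Longrightarrow> finite C \<Longrightarrow> A \<subseteq> cl (C \<union> B) \<Longrightarrow> rk cl A B \<le> card C"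
proof -
  assume a: "C \<subseteq> A" "finite C" "A \<subseteq> cl (C \<union> B)"
  show ?thesis unfolding rk_def by (rule Least_le) (use a in blast)
qed

lemma rk_witness:
  assumes "finite A"
  shows "\<exists>C. C \<subseteq> A \<and> finite C \<and> card C = rk cl A B \<and> A \<subseteq> cl (C \<union> B) \<and> indep cl B C"
proof -
  let ?P = "\<lambda>n. \<exists>C. C \<subseteq> A \<and> finite C \<and> card C = n \<and> A \<subseteq> cl (C \<union> B)"
  have "A \<subseteq> cl (A \<union> B)" using cl_ext[of "A \<union> B"] by blast
  then have "?P (card A)" using assms by blast
  then have "?P (rk cl A B)" unfolding rk_def by (rule LeastI[where P = ?P])
  then obtain C where C: "C \<subseteq> A" "finite C" "card C = rk cl A B" "A \<subseteq> cl (C \<union> B)" by blast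
  have "indep cl B C"
    unfolding indep_def
  proof
    fix c assume c: "c \<in> C"
    show "c \<notin> cl ((C - {c}) \<union> B)"
    proof
      assume h: "c \<in> cl ((C - {c}) \<union> B)"
      have "(C - {c}) \<union> B \<subseteq> cl ((C - {c}) \<union> B)" by (rule cl_ext)
      then have "C \<union> B \<subseteq> cl ((C - {c}) \<union> B)" using h by blast
      then have "cl (C \<union> B) \<subseteq> cl ((C - {c}) \<union> B)" using cl_sub by blast
      then have "A \<subseteq> cl ((C - {c}) \<union> B)" using C(4) by blast
      moreover have "C - {c} \<subseteq> A" "finite (C - {c})" using C(1,2) by auto
      ultimately have "rk cl A B \<le> card (C - {c})" using rk_le by blast
      moreover have "card (C - {c}) < card C" using C(2) c by (rule card_Diff1_less)
      ultimately show False using C(3) by simp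
    qed
  qed
  then show ?thesis using C by (intro exI[of _ C]) simp
qed

lemma rk_ge:
  assumes "finite A" "finite I" "indep cl B I" "I \<subseteq> cl (A \<union> B)"
  shows "card I \<le> rk cl A B"
proof -
  obtain C where C: "C \<subseteq> A" "finite C" "card C = rk cl A B" "A \<subseteq> cl (C \<union> B)"
    using rk_witness[OF assms(1)] by blast
  have "A \<union> B \<subseteq> cl (C \<union> B)" using C(4) cl_ext[of "C \<union> B"] by blast
  then have "cl (A \<union> B) \<subseteq> cl (C \<union> B)" by (rule cl_sub)
  then have "I \<subseteq> cl (C \<union> B)" using assms(4) by blast
  then show ?thesis using steinitz[OF C(2) assms(2,3)] C(3) by simp
qed

lemma rk_eq:
  assumes "C \<subseteq> A" "finite A" "indep cl B C" "A \<subseteq> cl (C \<union> B)"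
  shows "rk cl A B = card C"
proof -
  have fC: "finite C" using assms(1,2) finite_subset by blast
  have "C \<subseteq> cl (A \<union> B)" using assms(1) cl_ext[of "A \<union> B"] by blast
  then show ?thesis using rk_le[OF assms(1) fC assms(4)] rk_ge[OF assms(2) fC assms(3)] by simp
qed

lemma rk_mono_cl:
  assumes "finite A" "finite A'" "A \<subseteq> cl (A' \<union> B)"
  shows "rk cl A B \<le> rk cl A' B"
proof -
  obtain C where C: "C \<subseteq> A" "finite C" "card C = rk cl A B" "indep cl B C"
    using rk_witness[OF assms(1)] by blast
  have "C \<subseteq> cl (A' \<union> B)" using C(1) assms(3) by blast
  then show ?thesis using rk_ge[OF assms(2) C(2,4)] C(3) by simp
qed

lemma rk_cong:
  assumes "finite A" "finite A'" "A \<subseteq> cl (A' \<union> B)" "A' \<subseteq> cl (A \<union> B)"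
  shows "rk cl A B = rk cl A' B"
  using rk_mono_cl assms by (simp add: le_antisym)

lemma rk_base_mono:
  assumes "B \<subseteq> B'" "finite A"
  shows "rk cl A B' \<le> rk cl A B"
proof -
  obtain C where C: "C \<subseteq> A" "finite C" "card C = rk cl A B" "A \<subseteq> cl (C \<union> B)"
    using rk_witness[OF assms(2)] by blast
  have "cl (C \<union> B) \<subseteq> cl (C \<union> B')" using assms(1) cl_mono[of "C \<union> B" "C \<union> B'"] by blast
  then have "A \<subseteq> cl (C \<union> B')" using C(4) by blast
  then show ?thesis using rk_le[OF C(1,2)] C(3) by simp
qed

lemma extend_indep:
  assumes "finite S" "I \<subseteq> S" "indep cl B I"
  shows "\<exists>J. I \<subseteq> J \<and> J \<subseteq> S \<and> indep cl B J \<and> S \<subseteq> cl (J \<union> B)"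
  using assms
proof (induction "card (S - I)" arbitrary: I rule: less_induct)
  case less
  show ?case
  proof (cases "S \<subseteq> cl (I \<union> B)")
    case True then show ?thesis using less.prems by blast
  next
    case False
    then obtain s where s: "s \<in> S" "s \<notin> cl (I \<union> B)" by blast
    have I': "indep cl B (insert s I)" "s \<notin> I" using indep_insert[OF less.prems(3) s(2)] by auto
    have "S - insert s I = (S - I) - {s}" by blast
    moreover have "s \<in> S - I" using s I'(2) by blast
    ultimately have lt: "card (S - insert s I) < card (S - I)"
      using less.prems(1) by (metis card_Diff1_less finite_Diff)
    obtain J where "insert s I \<subseteq> J" "J \<subseteq> S" "indep cl B J" "S \<subseteq> cl (J \<union> B)"
      using less.hyps[OF lt less.prems(1) _ I'(1)] s(1) less.prems(2) by blast
    then show ?thesis by blast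
  qed
qed

lemma rk_chain:
  assumes fA: "finite A" and fA': "finite A'"
  shows "rk cl (A \<union> A') B = rk cl A B + rk cl A' (A \<union> B)"
proof -
  obtain C where C: "C \<subseteq> A" "finite C" "card C = rk cl A B" "A \<subseteq> cl (C \<union> B)" "indep cl B C"
    using rk_witness[OF fA] by blast
  obtain J where J: "C \<subseteq> J" "J \<subseteq> C \<union> A'" "indep cl B J" "C \<union> A' \<subseteq> cl (J \<union> B)"
    using extend_indep[of "C \<union> A'" C B] C fA' by blast
  have fJ: "finite J" using J(2) C(2) fA' finite_subset by blast
  have clCJ: "cl (C \<union> B) \<subseteq> cl (J \<union> B)" using J(1) cl_mono[of "C \<union> B" "J \<union> B"] by blast
  have AA': "A \<union> A' \<subseteq> cl (J \<union> B)" using J(4) C(4) clCJ by blast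
  have r1: "rk cl (A \<union> A') B = card J"
    using rk_eq[of J "A \<union> A'" B] J C(1) fA fA' AA' by blast
  let ?C2 = "J - C"
  have C2A': "?C2 \<subseteq> A'" using J(2) by blast
  have "J \<union> B \<subseteq> ?C2 \<union> (A \<union> B)" using J(1) C(1) by blast
  then have "cl (J \<union> B) \<subseteq> cl (?C2 \<union> (A \<union> B))" by (rule cl_mono)
  then have span2: "A' \<subseteq> cl (?C2 \<union> (A \<union> B))" using J(4) by blast
  have ind2: "indep cl (A \<union> B) ?C2"
    unfolding indep_def
  proof
    fix c assume c: "c \<in> ?C2"
    have "(?C2 - {c}) \<union> (A \<union> B) \<subseteq> cl ((J - {c}) \<union> B)"
    proof -
      have "A \<subseteq> cl ((J - {c}) \<union> B)"
      proof -
        have "C \<union> B \<subseteq> (J - {c}) \<union> B" using J(1) c by blast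
        then have "cl (C \<union> B) \<subseteq> cl ((J - {c}) \<union> B)" by (rule cl_mono)
        then show ?thesis using C(4) by blast
      qed
      moreover have "(?C2 - {c}) \<union> B \<subseteq> cl ((J - {c}) \<union> B)" using cl_ext[of "(J - {c}) \<union> B"] by blast
      ultimately show ?thesis by blast
    qed
    then have "cl ((?C2 - {c}) \<union> (A \<union> B)) \<subseteq> cl ((J - {c}) \<union> B)" by (rule cl_sub)
    moreover have "c \<notin> cl ((J - {c}) \<union> B)" using J(3) c unfolding indep_def by blast
    ultimately show "c \<notin> cl ((?C2 - {c}) \<union> (A \<union> B))" by blast
  qed
  have r2: "rk cl A' (A \<union> B) = card ?C2"
    using rk_eq[OF C2A' fA' ind2 span2] .
  have "card J = card C + card ?C2"
  proof -
    have "J = C \<union> ?C2" "C \<inter> ?C2 = {}" using J(1) by auto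
    then show ?thesis using fJ C(2) by (metis card_Un_disjoint finite_Diff)
  qed
  then show ?thesis using r1 r2 C(3) by simp
qed

lemma indep_exists:
  assumes "\<And>I. finite I \<Longrightarrow> I \<subseteq> S \<Longrightarrow> \<not> S \<subseteq> cl (I \<union> B)"
  shows "\<exists>I. finite I \<and> I \<subseteq> S \<and> indep cl B I \<and> card I = n"
proof (induction n)
  case 0
  then show ?case by (rule exI[of _ "{}"]) (simp add: indep_def)
next
  case (Suc n)
  then obtain I where I: "finite I" "I \<subseteq> S" "indep cl B I" "card I = n" by blast
  then obtain s where s: "s \<in> S" "s \<notin> cl (I \<union> B)" using assms by blast
  show ?case using indep_insert[OF I(3) s(2)] I s by (intro exI[of _ "insert s I"]) auto
qed

lemma finite_basis_sub:
  assumes "finite A" "S \<subseteq> cl (A \<union> B)"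
  shows "\<exists>C. finite C \<and> C \<subseteq> S \<and> S \<subseteq> cl (C \<union> B)"
proof (rule ccontr)
  assume "\<not> ?thesis"
  then obtain I where I: "finite I" "I \<subseteq> S" "indep cl B I" "card I = Suc (rk cl A B)"
    using indep_exists[of S B "Suc (rk cl A B)"] by blast
  have "card I \<le> rk cl A B" using rk_ge[OF assms(1) I(1,3)] I(2) assms(2) by blast
  then show False using I(4) by simp
qed

end



hide_const (open) up_ring.coeff up_ring.monom Polynomials.degree Polynomials.lead_coeff Subrings.subfield

lemma subfield_UNIV: "subfield (UNIV :: 'a::field set)"
  by (simp add: Defs.subfield_def)

lemma subfield_Inter: "(\<And>F. F \<in> \<F> \<Longrightarrow> subfield F) \<Longrightarrow> subfield (\<Inter> \<F>)"
  unfolding Defs.subfield_def by blast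

lemma subfield_gen_field: "subfield (gen_field (S :: 'a::field set))"
  unfolding gen_field_def by (rule subfield_Inter) blast

lemma gen_field_sup: "S \<subseteq> gen_field S"
  unfolding gen_field_def by blast

lemma gen_field_least: "subfield F \<Longrightarrow> S \<subseteq> F \<Longrightarrow> gen_field S \<subseteq> F"
  unfolding gen_field_def by blast

lemma gen_field_mono: "S \<subseteq> T \<Longrightarrow> gen_field S \<subseteq> gen_field (T :: 'a::field set)"
  by (meson gen_field_least gen_field_sup order_trans subfield_gen_field)

lemma gen_field_eq: "subfield F \<Longrightarrow> gen_field F = F"
  by (simp add: gen_field_least gen_field_sup subset_antisym)

context
  fixes F :: "'a::field set"
  assumes F: "subfield F"
begin

lemma sf_0: "0 \<in> F" using F by (simp add: Defs.subfield_def)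
lemma sf_1: "1 \<in> F" using F by (simp add: Defs.subfield_def)
lemma sf_add: "x \<in> F \<Longrightarrow> y \<in> F \<Longrightarrow> x + y \<in> F" using F by (simp add: Defs.subfield_def)
lemma sf_mult: "x \<in> F \<Longrightarrow> y \<in> F \<Longrightarrow> x * y \<in> F" using F by (simp add: Defs.subfield_def)
lemma sf_uminus: "x \<in> F \<Longrightarrow> - x \<in> F" using F by (simp add: Defs.subfield_def)
lemma sf_inverse: "x \<in> F \<Longrightarrow> inverse x \<in> F"
  using F by (cases "x = 0") (auto simp add: Defs.subfield_def)
lemma sf_diff: "x \<in> F \<Longrightarrow> y \<in> F \<Longrightarrow> x - y \<in> F"
  using sf_add[of x "- y"] sf_uminus[of y] by simp
lemma sf_divide: "x \<in> F \<Longrightarrow> y \<in> F \<Longrightarrow> x / y \<in> F"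
  using sf_mult[of x "inverse y"] sf_inverse[of y] by (simp add: divide_inverse)
lemma sf_power: "x \<in> F \<Longrightarrow> x ^ n \<in> F"
  by (induction n) (auto simp: sf_1 sf_mult)
lemma sf_sum: "(\<And>i. i \<in> I \<Longrightarrow> f i \<in> F) \<Longrightarrow> sum f I \<in> F"
  by (induction I rule: infinite_finite_induct) (auto simp: sf_0 sf_add)
lemma sf_prod: "(\<And>i. i \<in> I \<Longrightarrow> f i \<in> F) \<Longrightarrow> prod f I \<in> F"
  by (induction I rule: infinite_finite_induct) (auto simp: sf_1 sf_mult)
lemma sf_of_nat: "of_nat n \<in> F"
  by (induction n) (auto simp: sf_0 sf_1 sf_add)

definition Lpoly :: "'a poly \<Rightarrow> bool" where
  "Lpoly p \<longleftrightarrow> (\<forall>i. coeff p i \<in> F)"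

lemma Lpoly_add: "Lpoly p \<Longrightarrow> Lpoly q \<Longrightarrow> Lpoly (p + q)"
  by (simp add: Lpoly_def sf_add)
lemma Lpoly_mult: "Lpoly p \<Longrightarrow> Lpoly q \<Longrightarrow> Lpoly (p * q)"
  unfolding Lpoly_def coeff_mult by (auto intro!: sf_sum sf_mult)
lemma Lpoly_uminus: "Lpoly p \<Longrightarrow> Lpoly (- p)"
  by (simp add: Lpoly_def sf_uminus)
lemma Lpoly_const: "c \<in> F \<Longrightarrow> Lpoly [:c:]"
  by (simp add: Lpoly_def coeff_pCons sf_0 split: nat.split)
lemma Lpoly_X: "Lpoly [:0, 1:]"
  by (simp add: Lpoly_def coeff_pCons sf_0 sf_1 split: nat.split)
lemma Lpoly_prod: "(\<And>i. i \<in> I \<Longrightarrow> Lpoly (f i)) \<Longrightarrow> Lpoly (prod f I)"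
proof (induction I rule: infinite_finite_induct)
  case (infinite A) then show ?case by (simp add: Lpoly_def coeff_1 sf_0 sf_1)
next
  case empty then show ?case by (simp add: Lpoly_def coeff_1 sf_0 sf_1)
next
  case (insert x F) then show ?case by (simp add: Lpoly_mult)
qed
lemma Lpoly_sum: "(\<And>i. i \<in> I \<Longrightarrow> Lpoly (f i)) \<Longrightarrow> Lpoly (sum f I)"
  by (simp add: Lpoly_def coeff_sum sf_sum)
lemma Lpoly_monom: "c \<in> F \<Longrightarrow> Lpoly (monom c n)"
  by (simp add: Lpoly_def coeff_monom sf_0)

lemma algebraic_self: "a \<in> F \<Longrightarrow> algebraic_over F a"
  unfolding algebraic_over_def
  by (rule exI[of _ "[:-a, 1:]"]) (auto simp: coeff_pCons sf_0 sf_1 sf_uminus split: nat.split)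

end

lemma algebraic_over_mono: "L \<subseteq> L' \<Longrightarrow> algebraic_over L a \<Longrightarrow> algebraic_over L' a"
  unfolding algebraic_over_def by blast



definition acl :: "'a::field set \<Rightarrow> 'a set" where
  "acl S0 = {a. algebraic_over (gen_field S0) a}"

lemma tdeg_rk: "tdeg A B = rk acl A B"
  by (simp add: tdeg_def rk_def acl_def subset_iff Un_commute Ball_def)

lemma ldim_rk: "ldim sc A B = rk (module.span sc) A B"
  by (simp add: ldim_def rk_def)

lemma frac_subfield:
  assumes L: "subfield L"
  shows "subfield {poly f a / poly g a | f g. Lpoly L f \<and> Lpoly L g \<and> poly g (a::'a::field) \<noteq> 0}"
    (is "subfield ?Fr")
  unfolding Defs.subfield_def
proof (intro conjI ballI impI)
  show "0 \<in> ?Fr"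
    by (rule CollectI, rule exI[of _ 0], rule exI[of _ 1]) (simp add: Lpoly_def L sf_0 sf_1 coeff_1)
  show "1 \<in> ?Fr"
    by (rule CollectI, rule exI[of _ 1], rule exI[of _ 1]) (simp add: Lpoly_def L sf_0 sf_1 coeff_1)
  fix x assume "x \<in> ?Fr"
  then obtain f g where fg: "x = poly f a / poly g a" "Lpoly L f" "Lpoly L g" "poly g a \<noteq> 0" by blast
  show "- x \<in> ?Fr"
    by (rule CollectI, rule exI[of _ "- f"], rule exI[of _ g]) (simp add: fg Lpoly_uminus L)
  {
    fix y assume "y \<in> ?Fr"
    then obtain f' g' where fg': "y = poly f' a / poly g' a" "Lpoly L f'" "Lpoly L g'" "poly g' a \<noteq> 0" by blast
    show "x + y \<in> ?Fr"
      by (rule CollectI, rule exI[of _ "f * g' + f' * g"], rule exI[of _ "g * g'"])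
         (simp add: fg fg' Lpoly_add Lpoly_mult L field_simps)
    show "x * y \<in> ?Fr"
      by (rule CollectI, rule exI[of _ "f * f'"], rule exI[of _ "g * g'"])
         (simp add: fg fg' Lpoly_mult L)
  }
  assume "x \<noteq> 0"
  then have "poly f a \<noteq> 0" using fg by simp
  then show "inverse x \<in> ?Fr"
    by (intro CollectI exI[of _ g] exI[of _ f]) (simp add: fg)
qed

lemma exch_alg:
  assumes b: "b \<in> acl (insert a C)" and nb: "b \<notin> acl (C :: 'a::field set)"
  shows "a \<in> acl (insert b C)"
proof -
  define L where "L = gen_field C"
  have L: "subfield L" unfolding L_def by (rule subfield_gen_field)
  define Fr where "Fr = {poly f a / poly g a | f g. Lpoly L f \<and> Lpoly L g \<and> poly g a \<noteq> 0}"
  have Fr: "subfield Fr" unfolding Fr_def by (rule frac_subfield[OF L])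
  have "insert a C \<subseteq> Fr"
  proof
    fix x assume "x \<in> insert a C"
    then show "x \<in> Fr"
    proof
      assume "x = a"
      then show ?thesis unfolding Fr_def
        using Lpoly_X[OF L] Lpoly_const[OF L sf_1[OF L]]
        by (intro CollectI exI[of _ "[:0, 1:]"] exI[of _ "[:1:]"]) simp
    next
      assume "x \<in> C"
      then have "x \<in> L" unfolding L_def using gen_field_sup[of C] by blast
      then show ?thesis unfolding Fr_def
        using Lpoly_const[OF L \<open>x \<in> L\<close>] Lpoly_const[OF L sf_1[OF L]]
        by (intro CollectI exI[of _ "[:x:]"] exI[of _ "[:1:]"]) simp
    qed
  qed
  then have "gen_field (insert a C) \<subseteq> Fr" using gen_field_least[OF Fr] by blast
  moreover have "algebraic_over (gen_field (insert a C)) b" using b unfolding acl_def by simp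
  ultimately have "algebraic_over Fr b" by (rule algebraic_over_mono)
  then obtain p where p: "p \<noteq> 0" "\<forall>i. coeff p i \<in> Fr" "poly p b = 0"
    unfolding algebraic_over_def by blast
  define n where "n = degree p"
  have "\<forall>i. \<exists>fg. Lpoly L (fst fg) \<and> Lpoly L (snd fg) \<and> poly (snd fg) a \<noteq> 0 \<and>
                coeff p i = poly (fst fg) a / poly (snd fg) a"
  proof
    fix i
    have "coeff p i \<in> Fr" using p(2) by blast
    then obtain f g where "Lpoly L f" "Lpoly L g" "poly g a \<noteq> 0" "coeff p i = poly f a / poly g a"
      unfolding Fr_def by blast
    then show "\<exists>fg. Lpoly L (fst fg) \<and> Lpoly L (snd fg) \<and> poly (snd fg) a \<noteq> 0 \<and>
                coeff p i = poly (fst fg) a / poly (snd fg) a" by (intro exI[of _ "(f, g)"]) simp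
  qed
  then obtain fg where fgall: "\<forall>i. Lpoly L (fst (fg i)) \<and> Lpoly L (snd (fg i)) \<and> poly (snd (fg i)) a \<noteq> 0 \<and>
                coeff p i = poly (fst (fg i)) a / poly (snd (fg i)) a"
    by (rule choice[THEN exE]) blast
  have fg: "\<And>i. Lpoly L (fst (fg i))" "\<And>i. Lpoly L (snd (fg i))"
      "\<And>i. poly (snd (fg i)) a \<noteq> 0" "\<And>i. coeff p i = poly (fst (fg i)) a / poly (snd (fg i)) a"
    using fgall by blast+
  define f where "f i = fst (fg i)" for i
  define g where "g i = snd (fg i)" for i
  note fgs = fg[folded f_def g_def]
  define h where "h i = f i * (\<Prod>j\<in>{..n} - {i}. g j)" for i
  have Lh: "Lpoly L (h i)" for i
    unfolding h_def using fgs by (intro Lpoly_mult[OF L] Lpoly_prod[OF L]) auto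
  define G where "G = (\<Prod>j\<le>n. poly (g j) a)"
  have G0: "G \<noteq> 0" unfolding G_def using fgs(3) by simp
  have eqh: "poly (h i) a = coeff p i * G" if "i \<le> n" for i
  proof -
    have "G = poly (g i) a * (\<Prod>j\<in>{..n} - {i}. poly (g j) a)"
      unfolding G_def using that by (simp add: prod.remove)
    then show ?thesis unfolding h_def using fgs(3,4)[of i]
      by (simp add: poly_prod)
  qed
  have sum0: "(\<Sum>i\<le>n. poly (h i) a * b ^ i) = 0"
  proof -
    have "(\<Sum>i\<le>n. poly (h i) a * b ^ i) = (\<Sum>i\<le>n. G * (coeff p i * b ^ i))"
      by (rule sum.cong) (auto simp: eqh)
    also have "\<dots> = G * poly p b" by (simp add: poly_altdef n_def sum_distrib_left)
    finally show ?thesis using p(3) by simp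
  qed
  have hn: "poly (h n) a \<noteq> 0"
    using eqh[of n] G0 p(1) unfolding n_def by simp
  define m where "m = (\<Sum>i\<le>n. degree (h i))"
  have dm: "degree (h i) \<le> m" if "i \<le> n" for i
    unfolding m_def using that by (intro member_le_sum) auto
  define r where "r k = (\<Sum>i\<le>n. coeff (h i) k * b ^ i)" for k
  define R where "R = (\<Sum>k\<le>m. monom (r k) k)"
  have polyh: "poly (h i) a = (\<Sum>k\<le>m. coeff (h i) k * a ^ k)" if "i \<le> n" for i
  proof -
    have "poly (h i) a = poly (\<Sum>k\<le>m. monom (coeff (h i) k) k) a"
      using poly_as_sum_of_monoms'[OF dm[OF that]] by simp
    then show ?thesis by (simp add: poly_sum poly_monom)
  qed
  have "poly R a = (\<Sum>k\<le>m. \<Sum>i\<le>n. coeff (h i) k * b ^ i * a ^ k)"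
    unfolding R_def r_def by (simp add: poly_sum poly_monom sum_distrib_right)
  also have "\<dots> = (\<Sum>i\<le>n. \<Sum>k\<le>m. coeff (h i) k * b ^ i * a ^ k)"
    by (rule sum.swap)
  also have "\<dots> = (\<Sum>i\<le>n. poly (h i) a * b ^ i)"
    by (rule sum.cong) (auto simp: polyh sum_distrib_right sum_distrib_left mult_ac)
  finally have R0: "poly R a = 0" using sum0 by simp
  define M where "M = gen_field (insert b C)"
  have M: "subfield M" unfolding M_def by (rule subfield_gen_field)
  have LM: "L \<subseteq> M" unfolding L_def M_def by (rule gen_field_mono) blast
  have bM: "b \<in> M" unfolding M_def using gen_field_sup[of "insert b C"] by blast
  have coeffR: "coeff R k = (if k \<le> m then r k else 0)" for k
  proof (cases "k \<le> m")
    case True then show ?thesis unfolding R_def by (simp add: coeff_sum_monom)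
  next
    case False then show ?thesis unfolding R_def by (simp add: coeff_sum coeff_monom)
  qed
  have RM: "coeff R k \<in> M" for k
  proof -
    have "coeff (h i) k \<in> M" for i using Lh[of i, unfolded Lpoly_def[OF L]] LM by blast
    then have "r k \<in> M" unfolding r_def
      using bM by (intro sf_sum[OF M] sf_mult[OF M] sf_power[OF M]) auto
    then show ?thesis using coeffR sf_0[OF M] by simp
  qed
  have "R \<noteq> 0"
  proof
    assume "R = 0"
    then have rk0: "r k = 0" if "k \<le> m" for k using coeffR[of k] that by simp
    have "coeff (h n) k = 0" for k
    proof (cases "k \<le> m")
      case True
      define Q where "Q = (\<Sum>i\<le>n. monom (coeff (h i) k) i)"
      have "coeff (h i) k \<in> L" for i using Lh[of i, unfolded Lpoly_def[OF L]] by blast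
      then have LQ: "Lpoly L Q" unfolding Q_def
        by (intro Lpoly_sum[OF L] Lpoly_monom[OF L]) auto
      have "poly Q b = r k" unfolding Q_def r_def by (simp add: poly_sum poly_monom)
      then have "poly Q b = 0" using rk0 True by simp
      moreover have "\<not> algebraic_over L b" using nb unfolding acl_def L_def by simp
      ultimately have "Q = 0" using LQ unfolding algebraic_over_def Lpoly_def[OF L] by blast
      then have "coeff Q n = 0" by simp
      then show ?thesis unfolding Q_def by (simp add: coeff_sum_monom)
    next
      case False
      then have "degree (h n) < k" using dm[of n] by simp
      then show ?thesis by (simp add: coeff_eq_0)
    qed
    then have "h n = 0" by (simp add: poly_eqI)
    then show False using hn by simp
  qed
  then have "algebraic_over M a" unfolding algebraic_over_def using RM R0 by blast
  then show ?thesis unfolding acl_def M_def by simp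
qed

lemma pregeom_acl: "pregeom (acl :: 'a::field set \<Rightarrow> 'a set)"
proof
  fix A B :: "'a set"
  assume "A \<subseteq> B"
  then have "gen_field A \<subseteq> gen_field B" by (rule gen_field_mono)
  then show "acl A \<subseteq> acl B" unfolding acl_def using algebraic_over_mono[of "gen_field A" "gen_field B"] by blast
next
  fix A :: "'a set"
  show "A \<subseteq> acl A" unfolding acl_def using algebraic_self[OF subfield_gen_field, of _ A] gen_field_sup[of A] by blast
next
  fix A :: "'a set"
  have S: "subfield (acl A)" unfolding acl_def by (rule subfield_algebraics[OF subfield_gen_field])
  show "acl (acl A) \<subseteq> acl A"
  proof
    fix x assume "x \<in> acl (acl A)"
    then have "algebraic_over (acl A) x" unfolding acl_def[of "acl A"] using gen_field_eq[OF S] by simp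
    then show "x \<in> acl A" unfolding acl_def[of A] using algebraic_trans[OF subfield_gen_field]
      by (simp add: acl_def)
  qed
next
  fix a b :: 'a and C
  assume "b \<in> acl (insert a C)" "b \<notin> acl C"
  then show "a \<in> acl (insert b C)" by (rule exch_alg)
qed



inductive_set RE :: "'a::field set \<Rightarrow> 'a set \<Rightarrow> 'a set" for A B where
  RE_base: "a \<in> A \<Longrightarrow> b \<in> B \<Longrightarrow> a * b \<in> RE A B"
| RE_add: "x \<in> RE A B \<Longrightarrow> y \<in> RE A B \<Longrightarrow> x + y \<in> RE A B"

context
  fixes A B :: "'a::field set"
  assumes A: "subfield A" and B: "subfield B"
begin

lemma RE_mult_base: "x \<in> RE A B \<Longrightarrow> a \<in> A \<Longrightarrow> b \<in> B \<Longrightarrow> x * (a * b) \<in> RE A B"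
proof (induction rule: RE.induct)
  case (RE_base a' b')
  have "a' * b' * (a * b) = (a' * a) * (b' * b)" by (simp add: mult_ac)
  then show ?case using RE_base sf_mult[OF A] sf_mult[OF B] RE.RE_base by metis
next
  case (RE_add x y)
  then show ?case by (simp add: distrib_right RE.RE_add)
qed

lemma RE_mult: assumes x: "x \<in> RE A B" and y: "y \<in> RE A B" shows "x * y \<in> RE A B"
  using y
proof (induction rule: RE.induct)
  case (RE_base a b)
  then show ?case using RE_mult_base x by blast
next
  case (RE_add y z)
  then show ?case by (simp add: distrib_left RE.RE_add)
qed

lemma RE_uminus: "x \<in> RE A B \<Longrightarrow> - x \<in> RE A B"
proof (induction rule: RE.induct)
  case (RE_base a b)
  then show ?case using RE.RE_base[where a="- a" and b="b"] sf_uminus[OF A] by simp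
next
  case (RE_add x y)
  then show ?case using RE.RE_add[where x="- x" and y="- y"] by (simp add: add.commute)
qed

lemma RE_one: "1 \<in> RE A B" using RE.RE_base[where a="1" and b="1"] sf_1[OF A] sf_1[OF B] by simp
lemma RE_zero: "0 \<in> RE A B" using RE.RE_base[where a="0" and b="1"] sf_0[OF A] sf_1[OF B] by simp
lemma RE_A: "a \<in> A \<Longrightarrow> a \<in> RE A B" using RE.RE_base[where a="a" and b="1"] sf_1[OF B] by simp
lemma RE_B: "b \<in> B \<Longrightarrow> b \<in> RE A B" using RE.RE_base[where a="1" and b="b"] sf_1[OF A] by simp

lemma RE_prod: "(\<And>i. i \<in> I \<Longrightarrow> f i \<in> RE A B) \<Longrightarrow> prod f I \<in> RE A B"
  by (induction I rule: infinite_finite_induct) (auto simp: RE_one RE_mult)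

lemma RE_repr: "x \<in> RE A B \<Longrightarrow> \<exists>T \<beta>. finite T \<and> T \<subseteq> A \<and> (\<forall>t. \<beta> t \<in> B) \<and> x = (\<Sum>t\<in>T. t * \<beta> t)"
proof (induction rule: RE.induct)
  case (RE_base a b)
  then show ?case by (intro exI[of _ "{a}"] exI[of _ "\<lambda>_. b"]) auto
next
  case (RE_add x y)
  then obtain T1 \<beta>1 T2 \<beta>2 where t1: "finite T1" "T1 \<subseteq> A" "\<forall>t. \<beta>1 t \<in> B" "x = (\<Sum>t\<in>T1. t * \<beta>1 t)"
    and t2: "finite T2" "T2 \<subseteq> A" "\<forall>t. \<beta>2 t \<in> B" "y = (\<Sum>t\<in>T2. t * \<beta>2 t)" by blast
  define \<beta> where "\<beta> t = (if t \<in> T1 then \<beta>1 t else 0) + (if t \<in> T2 then \<beta>2 t else 0)" for t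
  have "\<forall>t. \<beta> t \<in> B" unfolding \<beta>_def using t1(3) t2(3) sf_0[OF B] sf_add[OF B] by simp
  moreover have "x + y = (\<Sum>t\<in>T1 \<union> T2. t * \<beta> t)"
  proof -
    have "(\<Sum>t\<in>T1 \<union> T2. t * \<beta> t) = (\<Sum>t\<in>T1 \<union> T2. t * (if t \<in> T1 then \<beta>1 t else 0)) +
        (\<Sum>t\<in>T1 \<union> T2. t * (if t \<in> T2 then \<beta>2 t else 0))"
      unfolding \<beta>_def by (simp add: distrib_left sum.distrib)
    also have "(\<Sum>t\<in>T1 \<union> T2. t * (if t \<in> T1 then \<beta>1 t else 0)) = x"
      unfolding t1(4) using t1(1) t2(1) by (intro sum.mono_neutral_cong_right) auto
    also have "(\<Sum>t\<in>T1 \<union> T2. t * (if t \<in> T2 then \<beta>2 t else 0)) = y"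
      unfolding t2(4) using t1(1) t2(1) by (intro sum.mono_neutral_cong_right) auto
    finally show ?thesis by simp
  qed
  ultimately show ?case using t1(1,2) t2(1,2) by (intro exI[of _ "T1 \<union> T2"] exI[of _ \<beta>]) auto
qed

lemma frac_RE_subfield: "subfield {x / y | x y. x \<in> RE A B \<and> y \<in> RE A B \<and> y \<noteq> 0}" (is "subfield ?Fr")
  unfolding Defs.subfield_def
proof (intro conjI ballI impI)
  show "0 \<in> ?Fr" using RE_zero RE_one by (intro CollectI exI[of _ 0] exI[of _ 1]) simp
  show "1 \<in> ?Fr" using RE_one by (intro CollectI exI[of _ 1] exI[of _ 1]) simp
  fix x assume "x \<in> ?Fr"
  then obtain a b where ab: "x = a / b" "a \<in> RE A B" "b \<in> RE A B" "b \<noteq> 0" by blast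
  show "- x \<in> ?Fr" using ab RE_uminus by (intro CollectI exI[of _ "- a"] exI[of _ b]) simp
  {
    fix y assume "y \<in> ?Fr"
    then obtain c d where cd: "y = c / d" "c \<in> RE A B" "d \<in> RE A B" "d \<noteq> 0" by blast
    have eq: "x + y = (a * d + c * b) / (b * d)" using ab cd by (simp add: field_simps)
    have "a * d \<in> RE A B" "c * b \<in> RE A B" using ab cd RE_mult by auto
    then have "a * d + c * b \<in> RE A B" by (rule RE.RE_add)
    moreover have "b * d \<in> RE A B" "b * d \<noteq> 0" using ab cd RE_mult by auto
    ultimately have "a * d + c * b \<in> RE A B" "b * d \<in> RE A B" "b * d \<noteq> 0" by auto
    then show "x + y \<in> ?Fr" using eq by blast
    show "x * y \<in> ?Fr" using ab cd RE_mult
      by (intro CollectI exI[of _ "a * c"] exI[of _ "b * d"]) simp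
  }
  assume "x \<noteq> 0"
  then show "inverse x \<in> ?Fr" using ab by (intro CollectI exI[of _ b] exI[of _ a]) simp
qed

end

lemma LD_induct:
  assumes F1: "subfield F1" and E: "subfield E" and F3: "subfield F3"
    and F1E: "F1 \<subseteq> E" and EF3: "E \<subseteq> F3"
    and LD: "linearly_disjoint F1 F2 F3" and s: "s \<in> F3"
  shows "finite T \<Longrightarrow> T \<subseteq> F2 \<Longrightarrow> (\<forall>t i. \<beta> t i \<in> E) \<Longrightarrow>
    (\<Sum>i\<le>n. (\<Sum>t\<in>T. t * \<beta> t i) * s ^ i) = 0 \<Longrightarrow> (\<exists>i\<le>n. (\<Sum>t\<in>T. t * \<beta> t i) \<noteq> 0) \<Longrightarrow>
    algebraic_over E (s :: 'a::field)"
proof (induction "card T" arbitrary: T \<beta> rule: less_induct)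
  case less
  note T = less.prems
  show ?case
  proof (cases "lin_indep_over F1 T")
    case True
    then have ind3: "lin_indep_over F3 T" using LD T(1,2) unfolding linearly_disjoint_def by blast
    define c where "c t = (\<Sum>i\<le>n. \<beta> t i * s ^ i)" for t
    have c3: "c t \<in> F3" for t
      unfolding c_def using T(3) EF3 s by (intro sf_sum[OF F3] sf_mult[OF F3] sf_power[OF F3]) auto
    have "(\<Sum>t\<in>T. c t * t) = (\<Sum>i\<le>n. (\<Sum>t\<in>T. t * \<beta> t i) * s ^ i)"
      unfolding c_def by (simp add: sum_distrib_right sum_distrib_left mult_ac sum.swap[of _ T])
    then have "(\<Sum>t\<in>T. c t * t) = 0" using T(4) by simp
    then have c0: "\<forall>t\<in>T. c t = 0" using ind3 T(1) c3 unfolding lin_indep_over_def by blast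
    obtain i0 where i0: "i0 \<le> n" "(\<Sum>t\<in>T. t * \<beta> t i0) \<noteq> 0" using T(5) by blast
    then obtain t0 where t0: "t0 \<in> T" "\<beta> t0 i0 \<noteq> 0"
      by (metis (no_types, lifting) mult_zero_right sum.neutral)
    define P where "P = (\<Sum>i\<le>n. monom (\<beta> t0 i) i)"
    have "coeff P i0 = \<beta> t0 i0" unfolding P_def using i0(1) by (simp add: coeff_sum_monom)
    then have "P \<noteq> 0" using t0 by auto
    moreover have "coeff P i \<in> E" for i
      unfolding P_def coeff_sum using T(3) sf_0[OF E]
      by (intro sf_sum[OF E]) (auto simp: coeff_monom)
    moreover have "poly P s = c t0" unfolding P_def c_def by (simp add: poly_sum poly_monom)
    ultimately show ?thesis unfolding algebraic_over_def using c0 t0(1) by auto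
  next
    case False
    then obtain S c t0 where S: "finite S" "S \<subseteq> T" "\<forall>t\<in>S. c t \<in> F1" "(\<Sum>t\<in>S. c t * t) = 0"
        "t0 \<in> S" "c t0 \<noteq> 0"
      unfolding lin_indep_over_def by blast
    have t0T: "t0 \<in> T" using S by blast
    define T' where "T' = T - {t0}"
    define lam where "lam t = (if t \<in> S - {t0} then - c t / c t0 else 0)" for t
    have lamF: "lam t \<in> F1" for t
      unfolding lam_def using S(3) sf_0[OF F1] sf_divide[OF F1] sf_uminus[OF F1] S(5) by auto
    have t0eq: "t0 = (\<Sum>t\<in>T'. lam t * t)"
    proof -
      have "(\<Sum>t\<in>S. c t * t) = c t0 * t0 + (\<Sum>t\<in>S - {t0}. c t * t)"
        using S(1,5) by (simp add: sum.remove)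
      then have "c t0 * t0 = - (\<Sum>t\<in>S - {t0}. c t * t)" using S(4) by (simp add: eq_neg_iff_add_eq_0)
      then have "t0 = - (\<Sum>t\<in>S - {t0}. c t * t) / c t0" using S(6) by (simp add: field_simps)
      also have "\<dots> = (\<Sum>t\<in>S - {t0}. (- c t / c t0) * t)"
        by (simp add: sum_divide_distrib sum_negf[symmetric] field_simps)
      also have "\<dots> = (\<Sum>t\<in>S - {t0}. lam t * t)"
        by (rule sum.cong) (auto simp: lam_def)
      also have "\<dots> = (\<Sum>t\<in>T'. lam t * t)"
        using S(2) T(1) unfolding T'_def by (intro sum.mono_neutral_cong_left) (auto simp: lam_def)
      finally show ?thesis .
    qed
    define \<beta>' where "\<beta>' t i = \<beta> t i + lam t * \<beta> t0 i" for t i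
    have \<beta>'E: "\<forall>t i. \<beta>' t i \<in> E"
      unfolding \<beta>'_def using T(3) lamF F1E sf_add[OF E] sf_mult[OF E] by blast
    have sums: "(\<Sum>t\<in>T'. t * \<beta>' t i) = (\<Sum>t\<in>T. t * \<beta> t i)" for i
    proof -
      have "(\<Sum>t\<in>T'. t * \<beta>' t i) = (\<Sum>t\<in>T'. t * \<beta> t i) + (\<Sum>t\<in>T'. lam t * t) * \<beta> t0 i"
        unfolding \<beta>'_def by (simp add: distrib_left sum.distrib sum_distrib_right sum_distrib_left mult_ac)
      also have "\<dots> = (\<Sum>t\<in>T'. t * \<beta> t i) + t0 * \<beta> t0 i" using t0eq by simp
      also have "\<dots> = (\<Sum>t\<in>T. t * \<beta> t i)"
        unfolding T'_def using T(1) t0T by (simp add: sum.remove add.commute)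
      finally show ?thesis .
    qed
    have lt: "card T' < card T" unfolding T'_def using T(1) t0T by (rule card_Diff1_less)
    have "finite T'" "T' \<subseteq> F2" using T(1,2) unfolding T'_def by auto
    then show ?thesis
      using less.hyps[OF lt \<open>finite T'\<close> \<open>T' \<subseteq> F2\<close> \<beta>'E] T(4,5) by (simp add: sums)
  qed
qed


lemma LD_core:
  assumes F1: "subfield F1" and F2: "subfield F2" and E: "subfield E" and F3: "subfield F3"
    and F1E: "F1 \<subseteq> E" and EF3: "E \<subseteq> F3"
    and LD: "linearly_disjoint F1 F2 F3" and s: "s \<in> F3"
    and alg: "algebraic_over (gen_field (F2 \<union> E)) (s :: 'a::field)"
  shows "algebraic_over E s"
proof -
  define Fr where "Fr = {x / y | x y. x \<in> RE F2 E \<and> y \<in> RE F2 E \<and> y \<noteq> 0}"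
  have Fr: "subfield Fr" unfolding Fr_def by (rule frac_RE_subfield[OF F2 E])
  have "F2 \<union> E \<subseteq> Fr"
  proof
    fix a assume "a \<in> F2 \<union> E"
    then have "a \<in> RE F2 E" using RE_A[OF F2 E, of a] RE_B[OF F2 E, of a] by blast
    then show "a \<in> Fr" unfolding Fr_def using RE_one[OF F2 E]
      by (intro CollectI exI[of _ a] exI[of _ 1]) simp
  qed
  then have "gen_field (F2 \<union> E) \<subseteq> Fr" by (rule gen_field_least[OF Fr])
  then have "algebraic_over Fr s" using alg by (rule algebraic_over_mono)
  then obtain p where p: "p \<noteq> 0" "\<forall>i. coeff p i \<in> Fr" "poly p s = 0"
    unfolding algebraic_over_def by blast
  define n where "n = degree p"
  have "\<forall>i. \<exists>xy. fst xy \<in> RE F2 E \<and> snd xy \<in> RE F2 E \<and> snd xy \<noteq> 0 \<and> coeff p i = fst xy / snd xy"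
  proof
    fix i
    have "coeff p i \<in> Fr" using p(2) by blast
    then obtain x y where "x \<in> RE F2 E" "y \<in> RE F2 E" "y \<noteq> 0" "coeff p i = x / y"
      unfolding Fr_def by blast
    then show "\<exists>xy. fst xy \<in> RE F2 E \<and> snd xy \<in> RE F2 E \<and> snd xy \<noteq> 0 \<and> coeff p i = fst xy / snd xy"
      by (intro exI[of _ "(x, y)"]) simp
  qed
  then obtain xy where xyall: "\<forall>i. fst (xy i) \<in> RE F2 E \<and> snd (xy i) \<in> RE F2 E \<and> snd (xy i) \<noteq> 0 \<and>
      coeff p i = fst (xy i) / snd (xy i)"
    by (rule choice[THEN exE]) blast
  define x where "x i = fst (xy i)" for i
  define y where "y i = snd (xy i)" for i
  have xy: "\<And>i. x i \<in> RE F2 E" "\<And>i. y i \<in> RE F2 E" "\<And>i. y i \<noteq> 0" "\<And>i. coeff p i = x i / y i"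
    using xyall unfolding x_def y_def by blast+
  define Y where "Y = (\<Prod>j\<le>n. y j)"
  have Y0: "Y \<noteq> 0" unfolding Y_def using xy(3) by simp
  define d where "d i = x i * (\<Prod>j\<in>{..n} - {i}. y j)" for i
  have dRE: "d i \<in> RE F2 E" for i
    unfolding d_def by (rule RE_mult[OF F2 E xy(1) RE_prod[OF F2 E xy(2)]])
  have deq: "d i = coeff p i * Y" if "i \<le> n" for i
  proof -
    have "Y = y i * (\<Prod>j\<in>{..n} - {i}. y j)" unfolding Y_def using that by (simp add: prod.remove)
    then show ?thesis unfolding d_def using xy(3,4)[of i] by simp
  qed
  have dsum: "(\<Sum>i\<le>n. d i * s ^ i) = 0"
  proof -
    have "(\<Sum>i\<le>n. d i * s ^ i) = (\<Sum>i\<le>n. Y * (coeff p i * s ^ i))"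
      by (rule sum.cong) (auto simp: deq)
    also have "\<dots> = Y * poly p s" by (simp add: poly_altdef n_def sum_distrib_left)
    finally show ?thesis using p(3) by simp
  qed
  have dn: "d n \<noteq> 0" using deq[of n] Y0 p(1) unfolding n_def by simp
  have "\<forall>i. \<exists>Tb. finite (fst Tb) \<and> fst Tb \<subseteq> F2 \<and> (\<forall>t. snd Tb t \<in> E) \<and> d i = (\<Sum>t\<in>fst Tb. t * snd Tb t)"
  proof
    fix i
    obtain T b where "finite T" "T \<subseteq> F2" "\<forall>t. b t \<in> E" "d i = (\<Sum>t\<in>T. t * b t)"
      using RE_repr[OF F2 E dRE[of i]] by blast
    then show "\<exists>Tb. finite (fst Tb) \<and> fst Tb \<subseteq> F2 \<and> (\<forall>t. snd Tb t \<in> E) \<and> d i = (\<Sum>t\<in>fst Tb. t * snd Tb t)"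
      by (intro exI[of _ "(T, b)"]) simp
  qed
  then obtain Tb where Tball: "\<forall>i. finite (fst (Tb i)) \<and> fst (Tb i) \<subseteq> F2 \<and> (\<forall>t. snd (Tb i) t \<in> E) \<and>
      d i = (\<Sum>t\<in>fst (Tb i). t * snd (Tb i) t)"
    by (rule choice[THEN exE]) blast
  define Ti where "Ti i = fst (Tb i)" for i
  define bi where "bi i = snd (Tb i)" for i
  have Tb: "\<And>i. finite (Ti i)" "\<And>i. Ti i \<subseteq> F2" "\<And>i t. bi i t \<in> E" "\<And>i. d i = (\<Sum>t\<in>Ti i. t * bi i t)"
    using Tball unfolding Ti_def bi_def by blast+
  define T where "T = (\<Union>i\<le>n. Ti i)"
  define \<beta> where "\<beta> t i = (if t \<in> Ti i then bi i t else 0)" for t i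
  have fT: "finite T" unfolding T_def using Tb(1) by blast
  have TF2: "T \<subseteq> F2" unfolding T_def using Tb(2) by blast
  have \<beta>E: "\<forall>t i. \<beta> t i \<in> E" unfolding \<beta>_def using Tb(3) sf_0[OF E] by simp
  have Tsum: "(\<Sum>t\<in>T. t * \<beta> t i) = d i" if "i \<le> n" for i
  proof -
    have "(\<Sum>t\<in>T. t * \<beta> t i) = (\<Sum>t\<in>Ti i. t * bi i t)"
      unfolding \<beta>_def using fT that unfolding T_def by (intro sum.mono_neutral_cong_right) auto
    then show ?thesis using Tb(4) by simp
  qed
  have "(\<Sum>i\<le>n. (\<Sum>t\<in>T. t * \<beta> t i) * s ^ i) = 0"
    using dsum by (simp add: Tsum)
  moreover have "\<exists>i\<le>n. (\<Sum>t\<in>T. t * \<beta> t i) \<noteq> 0" using dn Tsum[of n] by auto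
  ultimately show ?thesis
    using LD_induct[OF F1 E F3 F1E EF3 LD s fT TF2 \<beta>E] by blast
qed



lemma vs_qscale: "vector_space (scale :: 'k::field_char_0 \<Rightarrow> 'v::ab_group_add \<Rightarrow> 'v) \<Longrightarrow> vector_space (qscale scale)"
  unfolding vector_space_def qscale_def by (simp add: of_rat_add of_rat_mult)

lemma pregeom_span: "vector_space sc \<Longrightarrow> pregeom (module.span sc)"
proof -
  assume "vector_space sc"
  then interpret vector_space sc .
  show ?thesis
  proof
    show "A \<subseteq> B \<Longrightarrow> span A \<subseteq> span B" for A B by (rule span_mono)
    show "A \<subseteq> span A" for A by (rule span_superset)
    show "span (span A) \<subseteq> span A" for A by (simp add: span_span)
    show "b \<in> span (insert a C) \<Longrightarrow> b \<notin> span C \<Longrightarrow> a \<in> span (insert b C)" for a b C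
      by (rule in_span_insert)
  qed
qed

lemma spanQ_sub_spanK:
  assumes VS: "vector_space (scale :: 'k::field_char_0 \<Rightarrow> 'v::ab_group_add \<Rightarrow> 'v)"
  shows "module.span (qscale scale) S \<subseteq> module.span scale S"
proof -
  interpret K: vector_space scale by (rule VS)
  interpret Q: vector_space "qscale scale" by (rule vs_qscale[OF VS])
  have "Q.subspace (K.span S)"
    unfolding Q.subspace_def qscale_def using K.span_zero K.span_add K.span_scale by blast
  then show ?thesis using Q.span_minimal K.span_superset by blast
qed

lemma subspaceK_Q:
  assumes VS: "vector_space (scale :: 'k::field_char_0 \<Rightarrow> 'v::ab_group_add \<Rightarrow> 'v)"
    and "module.subspace scale U"
  shows "module.subspace (qscale scale) U"
proof -
  interpret K: vector_space scale by (rule VS)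
  interpret Q: vector_space "qscale scale" by (rule vs_qscale[OF VS])
  show ?thesis using assms(2) unfolding K.subspace_def Q.subspace_def qscale_def by blast
qed

lemma span_transfer:
  assumes VS: "vector_space sc"
    and U1: "module.subspace sc U1" and U2: "module.subspace sc U2" and U3: "module.subspace sc U3"
    and U12: "U1 \<subseteq> U2" and U23: "U2 \<inter> U3 \<subseteq> U1" and fA: "finite A" and AU3: "A \<subseteq> U3"
  shows "rk (module.span sc) A U2 = rk (module.span sc) A U1"
proof -
  interpret vector_space sc by (rule VS)
  interpret P: pregeom span by (rule pregeom_span[OF VS])
  have le: "rk span A U2 \<le> rk span A U1" by (rule P.rk_base_mono[OF U12 fA])
  obtain C where C: "C \<subseteq> A" "finite C" "card C = rk span A U2" "A \<subseteq> span (C \<union> U2)"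
    using P.rk_witness[OF fA] by blast
  have "A \<subseteq> span (C \<union> U1)"
  proof
    fix x assume xA: "x \<in> A"
    then have "x \<in> span (C \<union> U2)" using C(4) by blast
    then obtain a b where ab: "x = a + b" "a \<in> span C" "b \<in> span U2" unfolding span_Un by blast
    have bU2: "b \<in> U2" using ab(3) span_minimal[of U2 U2] U2 by blast
    have "span C \<subseteq> U3" using C(1) AU3 U3 span_minimal by blast
    have "a \<in> U3" using ab(2) \<open>span C \<subseteq> U3\<close> by blast
    moreover have "x \<in> U3" using xA AU3 by blast
    ultimately have "x - a \<in> U3" using U3 subspace_diff by blast
    moreover have "x - a = b" using ab(1) by simp
    ultimately have "b \<in> U3" by simp
    then have "b \<in> U1" using bU2 U23 by blast
    then have "b \<in> span (C \<union> U1)" by (intro span_base) blast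
    moreover have "a \<in> span (C \<union> U1)" using ab(2) span_mono[of C "C \<union> U1"] by blast
    ultimately show "x \<in> span (C \<union> U1)" using ab(1) span_add by blast
  qed
  then have "rk span A U1 \<le> card C" using P.rk_le C(1,2) by blast
  then show ?thesis using le C(3) by simp
qed

definition hom_dom :: "('k::field_char_0 \<Rightarrow> 'v::ab_group_add \<Rightarrow> 'v) \<Rightarrow> ('v \<Rightarrow> 'f::field) \<Rightarrow> 'v set \<Rightarrow> bool" where
  "hom_dom scale ex D \<longleftrightarrow> module.subspace (qscale scale) D \<and> (\<forall>x\<in>D. ex x \<noteq> 0) \<and>
     (\<forall>x\<in>D. \<forall>y\<in>D. ex (x + y) = ex x * ex y)"

context
  fixes scale :: "'k::field_char_0 \<Rightarrow> 'v::ab_group_add \<Rightarrow> 'v" and ex :: "'v \<Rightarrow> 'f::field" and D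
  assumes VS: "vector_space scale" and HD: "hom_dom scale ex D"
begin

interpretation Q: vector_space "qscale scale" by (rule vs_qscale[OF VS])
interpretation K: vector_space scale by (rule VS)

lemma hd_sub: "Q.subspace D" using HD by (simp add: hom_dom_def)
lemma hd_nz: "x \<in> D \<Longrightarrow> ex x \<noteq> 0" using HD by (simp add: hom_dom_def)
lemma hd_add: "x \<in> D \<Longrightarrow> y \<in> D \<Longrightarrow> ex (x + y) = ex x * ex y" using HD by (simp add: hom_dom_def)
lemma hd_0: "0 \<in> D" using hd_sub by (simp add: Q.subspace_def)
lemma hd_addD: "x \<in> D \<Longrightarrow> y \<in> D \<Longrightarrow> x + y \<in> D" using hd_sub by (simp add: Q.subspace_def)
lemma hd_scale: "x \<in> D \<Longrightarrow> qscale scale c x \<in> D" using hd_sub by (simp add: Q.subspace_def)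
lemma hd_neg: "x \<in> D \<Longrightarrow> - x \<in> D" by (rule Q.subspace_neg[OF hd_sub])
lemma hd_diff: "x \<in> D \<Longrightarrow> y \<in> D \<Longrightarrow> x - y \<in> D" by (rule Q.subspace_diff[OF hd_sub])

lemma ex_0: "ex 0 = 1"
proof -
  have "ex 0 = ex 0 * ex 0" using hd_add[OF hd_0 hd_0] by simp
  then show ?thesis using hd_nz[OF hd_0] by simp
qed

lemma ex_neg: assumes x: "x \<in> D" shows "ex (- x) = inverse (ex x)"
proof -
  have "1 = ex x * ex (- x)" using hd_add[OF x hd_neg[OF x]] ex_0 by simp
  then show ?thesis using hd_nz[OF x] by (metis inverse_unique)
qed

lemma ex_diff: assumes x: "x \<in> D" and y: "y \<in> D" shows "ex (x - y) = ex x / ex y"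
proof -
  have "ex x = ex (x - y) * ex y" using hd_add[OF hd_diff[OF x y] y] by simp
  then show ?thesis using hd_nz[OF y] by (simp add: field_simps)
qed

lemma ex_nat: "x \<in> D \<Longrightarrow> ex (qscale scale (of_nat n) x) = ex x ^ n"
proof (induction n)
  case 0
  then show ?case using ex_0 by (simp add: qscale_def K.scale_zero_left)
next
  case (Suc n)
  have "qscale scale (of_nat (Suc n)) x = qscale scale (of_nat n) x + x"
    using Q.scale_left_distrib[of "of_nat n" 1 x] by (simp add: add.commute)
  then show ?case using Suc hd_add[OF hd_scale[OF Suc.prems] Suc.prems] by simp
qed

lemma ex_int_pos: "x \<in> D \<Longrightarrow> ex (qscale scale (of_int k) x) = (if k \<ge> 0 then ex x ^ nat k else inverse (ex x ^ nat (- k)))"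
proof (cases "k \<ge> 0")
  case True
  assume x: "x \<in> D"
  have eq: "(of_int k :: rat) = of_nat (nat k)" using True by simp
  show ?thesis unfolding eq using True ex_nat[OF x, of "nat k"] by simp
next
  case False
  assume x: "x \<in> D"
  have eq: "(of_int k :: rat) = - of_nat (nat (- k))" using False by simp
  have "qscale scale (of_int k) x = - qscale scale (of_nat (nat (- k))) x"
    unfolding eq by (rule Q.scale_minus_left)
  then have "ex (qscale scale (of_int k) x) = inverse (ex (qscale scale (of_nat (nat (- k))) x))"
    using ex_neg[OF hd_scale[OF x]] by simp
  then show ?thesis using False ex_nat[OF x, of "nat (- k)"] by simp
qed

lemma ex_span_power:
  assumes SD: "S \<subseteq> D" and x: "x \<in> Q.span S"
  shows "\<exists>N>0. ex x ^ N \<in> gen_field (ex ` S)"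
proof -
  let ?G = "gen_field (ex ` S)"
  have G: "subfield ?G" by (rule subfield_gen_field)
  have exS: "s \<in> S \<Longrightarrow> ex s \<in> ?G" for s using gen_field_sup[of "ex ` S"] by blast
  have "x \<in> D \<longrightarrow> (\<exists>N>0. ex x ^ N \<in> ?G)"
    using x
  proof (induction rule: Q.span_induct_alt)
    case base
    show ?case using ex_0 sf_1[OF G] by (intro impI exI[of _ 1]) simp
  next
    case (step c s y)
    show ?case
    proof
      assume cy: "qscale scale c s + y \<in> D"
      have sD: "s \<in> D" using step(1) SD by blast
      have csD: "qscale scale c s \<in> D" by (rule hd_scale[OF sD])
      have yD: "y \<in> D" using hd_diff[OF cy csD] by simp
      obtain N where N: "N > 0" "ex y ^ N \<in> ?G" using step(2) yD by blast
      obtain a b where ab: "c = Fract a b" "b > 0" by (cases c) auto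
      have eqc: "(of_nat (nat b) :: rat) * c = of_int a" using ab by (simp add: Fract_of_int_quotient)
      have "ex (qscale scale c s) ^ nat b = ex (qscale scale (of_nat (nat b)) (qscale scale c s))"
        using ex_nat[OF csD, of "nat b"] by simp
      also have "\<dots> = ex (qscale scale (of_int a) s)" by (simp only: Q.scale_scale eqc)
      also have "\<dots> \<in> ?G" using ex_int_pos[OF sD, of a] exS[OF step(1)]
        by (simp add: sf_power[OF G] sf_inverse[OF G])
      finally have cG: "ex (qscale scale c s) ^ nat b \<in> ?G" .
      have "ex (qscale scale c s + y) ^ (nat b * N) = (ex (qscale scale c s) ^ nat b) ^ N * (ex y ^ N) ^ nat b"
        using hd_add[OF csD yD] by (simp add: power_mult power_mult_distrib mult.commute flip: power_mult)
      also have "\<dots> \<in> ?G" using cG N(2) by (simp add: sf_power[OF G] sf_mult[OF G])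
      finally show "\<exists>N>0. ex (qscale scale c s + y) ^ N \<in> ?G" using N(1) ab(2) by (intro exI[of _ "nat b * N"]) simp
    qed
  qed
  moreover have "x \<in> D" using x SD hd_sub Q.span_minimal by blast
  ultimately show ?thesis by blast
qed

lemma ex_span_acl:
  assumes SD: "S \<subseteq> D" and x: "x \<in> Q.span S"
  shows "ex x \<in> acl (ex ` S)"
proof -
  obtain N where N: "N > 0" "ex x ^ N \<in> gen_field (ex ` S)" using ex_span_power[OF SD x] by blast
  let ?G = "gen_field (ex ` S)"
  have G: "subfield ?G" by (rule subfield_gen_field)
  define P where "P = monom 1 N - [:ex x ^ N:]"
  have "coeff P N = 1" using N(1) unfolding P_def by (simp add: coeff_monom coeff_pCons split: nat.split)
  then have "P \<noteq> 0" by auto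
  moreover have "coeff P i \<in> ?G" for i
    unfolding P_def using N(2) sf_0[OF G] sf_1[OF G] sf_diff[OF G] sf_uminus[OF G]
    by (auto simp: coeff_monom coeff_pCons split: nat.split)
  moreover have "poly P (ex x) = 0" unfolding P_def by (simp add: poly_monom)
  ultimately show ?thesis unfolding acl_def algebraic_over_def by blast
qed

end



lemma setsum_iff: "x \<in> setsum A B \<longleftrightarrow> (\<exists>a\<in>A. \<exists>b\<in>B. x = a + b)"
  unfolding setsum_def by blast

lemma LD_inter:
  assumes F1: "subfield F1" and F2: "subfield F2" and F3: "subfield F3"
    and LD: "linearly_disjoint F1 F2 F3" and t2: "t \<in> F2" and t3: "t \<in> F3"
  shows "t \<in> (F1 :: 'a::field set)"
proof (rule ccontr)
  assume nt: "t \<notin> F1"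
  have t1: "t \<noteq> 1" using nt sf_1[OF F1] by auto
  have t0: "t \<noteq> 0" using nt sf_0[OF F1] by auto
  have ind1: "lin_indep_over F1 {1, t}"
    unfolding lin_indep_over_def
  proof (intro allI impI)
    fix S c assume S: "finite S" "S \<subseteq> {1, t}" and cF: "\<forall>s\<in>S. c s \<in> F1" and sum: "(\<Sum>s\<in>S. c s * s) = 0"
    have "S \<in> Pow {1, t}" using S(2) by simp
    then have cases: "S = {} \<or> S = {1} \<or> S = {t} \<or> S = {1, t}" by (simp add: Pow_insert) blast
    show "\<forall>s\<in>S. c s = 0"
    proof (cases "S = {1, t}")
      case True
      then have eq: "c 1 + c t * t = 0" using sum t1 by simp
      have ct: "c t = 0"
      proof (rule ccontr)
        assume "c t \<noteq> 0"
        then have "t = - c 1 / c t" using eq by (simp add: field_simps eq_neg_iff_add_eq_0)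
        moreover have "- c 1 / c t \<in> F1" using cF True sf_uminus[OF F1] sf_divide[OF F1] by simp
        ultimately show False using nt by simp
      qed
      then show ?thesis using eq True by simp
    next
      case False
      then show ?thesis using cases sum t0 by auto
    qed
  qed
  have "{1, t} \<subseteq> F2" using t2 sf_1[OF F2] by simp
  then have ind3: "lin_indep_over F3 {1, t}" using LD[unfolded linearly_disjoint_def, rule_format, of "{1, t}"] ind1 by simp
  define c where "c (s::'a) = (if s = 1 then t else - 1)" for s
  have "(\<Sum>s\<in>{1, t}. c s * s) = 0" using t1 unfolding c_def by simp
  moreover have "\<forall>s\<in>{1, t}. c s \<in> F3" unfolding c_def using t3 sf_1[OF F3] sf_uminus[OF F3] by simp
  ultimately have "c t = 0" using ind3[unfolded lin_indep_over_def, rule_format, of "{1, t}" c] by blast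
  then show False using t1 unfolding c_def by simp
qed

lemma subspace_setsum:
  assumes VS: "vector_space sc" and U: "module.subspace sc U" and W: "module.subspace sc W"
  shows "module.subspace sc (setsum U W)"
proof -
  interpret vector_space sc by (rule VS)
  show ?thesis
  proof (rule subspaceI)
    show "0 \<in> setsum U W" unfolding setsum_iff using subspace_0[OF U] subspace_0[OF W] by force
    fix x assume "x \<in> setsum U W"
    then obtain a b where ab: "a \<in> U" "b \<in> W" "x = a + b" unfolding setsum_iff by blast
    { fix c show "sc c x \<in> setsum U W" unfolding setsum_iff using ab subspace_scale[OF U] subspace_scale[OF W]
        by (intro bexI[of _ "sc c a"] bexI[of _ "sc c b"]) (auto simp: scale_right_distrib) }
    fix y assume "y \<in> setsum U W"
    then obtain a' b' where ab': "a' \<in> U" "b' \<in> W" "y = a' + b'" unfolding setsum_iff by blast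
    show "x + y \<in> setsum U W" unfolding setsum_iff using ab ab' subspace_add[OF U] subspace_add[OF W]
      by (intro bexI[of _ "a + a'"] bexI[of _ "b + b'"]) (auto simp: algebra_simps)
  qed
qed

locale amalg =
  fixes scale :: "'k::field_char_0 \<Rightarrow> 'v::ab_group_add \<Rightarrow> 'v" and ex :: "'v \<Rightarrow> 'f::field_char_0"
    and V1 D1 F1 V2 D2 F2 V3 D3 F3 V4 D4 F4
  assumes VS: "vector_space scale"
    and full: "full_kpf scale ex V1 D1 F1"
    and PA2: "powers_algebraic_ext scale ex V1 D1 F1 V2 D2 F2"
    and PA3: "powers_algebraic_ext scale ex V1 D1 F1 V3 D3 F3"
    and FA: "free_amalgam scale ex V1 D1 F1 V2 D2 F2 V3 D3 F3 V4 D4 F4"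
begin

interpretation K: vector_space scale by (rule VS)
interpretation Q: vector_space "qscale scale" by (rule vs_qscale[OF VS])
interpretation PK: pregeom K.span by (rule pregeom_span[OF VS])
interpretation PQ: pregeom Q.span by (rule pregeom_span[OF vs_qscale[OF VS]])
interpretation PT: pregeom acl by (rule pregeom_acl)

lemma pkpf_unf:
  assumes "pkpf scale ex V D F"
  shows "K.subspace V" "D \<subseteq> V" "Q.subspace D" "K.span D = V" "subfield F"
    "\<And>x. x \<in> D \<Longrightarrow> ex x \<in> F" "\<And>x. x \<in> D \<Longrightarrow> ex x \<noteq> 0"
    "\<And>x y. x \<in> D \<Longrightarrow> y \<in> D \<Longrightarrow> ex (x + y) = ex x * ex y" "gen_field (ex ` D) = F"
    "hom_dom scale ex D"
  using assms unfolding pkpf_def hom_dom_def by auto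

lemma pk1: "pkpf scale ex V1 D1 F1" and D1V1: "D1 = V1" and exD1: "ex ` D1 = F1 - {0}"
  using full unfolding full_kpf_def by auto

lemma h2: "pkpf scale ex V2 D2 F2" "V1 \<subseteq> V2" "D1 \<subseteq> D2" "F1 \<subseteq> F2" "kernel_preserving ex D1 D2"
    "\<And>z. set z \<subseteq> D2 \<Longrightarrow> predim scale ex (set z) D1 \<ge> 0"
    "\<And>z. set z \<subseteq> D2 \<Longrightarrow> \<exists>w. set w \<subseteq> D2 \<and> predim scale ex (set (z @ w)) D1 = 0"
  using PA2 unfolding powers_algebraic_ext_def strong_ext_def kpf_ext_def by auto

lemma h3: "pkpf scale ex V3 D3 F3" "V1 \<subseteq> V3" "D1 \<subseteq> D3" "F1 \<subseteq> F3" "kernel_preserving ex D1 D3"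
    "\<And>z. set z \<subseteq> D3 \<Longrightarrow> predim scale ex (set z) D1 \<ge> 0"
    "\<And>z. set z \<subseteq> D3 \<Longrightarrow> \<exists>w. set w \<subseteq> D3 \<and> predim scale ex (set (z @ w)) D1 = 0"
  using PA3 unfolding powers_algebraic_ext_def strong_ext_def kpf_ext_def by auto

lemma fa: "V2 \<inter> V3 = V1" "V4 = setsum V2 V3" "D4 = setsum D2 D3" "linearly_disjoint F1 F2 F3"
    "F4 = gen_field (F2 \<union> F3)" "\<And>z2 z3. z2 \<in> D2 \<Longrightarrow> z3 \<in> D3 \<Longrightarrow> ex (z2 + z3) = ex z2 * ex z3"
  using FA unfolding free_amalgam_def by auto

lemmas p1 = pkpf_unf[OF pk1]
lemmas p2 = pkpf_unf[OF h2(1)]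
lemmas p3 = pkpf_unf[OF h3(1)]

lemma predim_eq: "predim scale ex A B = int (rk K.span A B) + int (rk acl (ex ` A) (ex ` B)) - int (rk Q.span A B)"
  by (simp add: predim_def ldim_rk tdeg_rk)

lemma strong2: "finite S \<Longrightarrow> S \<subseteq> D2 \<Longrightarrow> predim scale ex S D1 \<ge> 0"
  using h2(6) finite_list by metis
lemma strong3: "finite S \<Longrightarrow> S \<subseteq> D3 \<Longrightarrow> predim scale ex S D1 \<ge> 0"
  using h3(6) finite_list by metis

lemma pa2: assumes "finite S" "S \<subseteq> D2" shows "\<exists>W. finite W \<and> S \<subseteq> W \<and> W \<subseteq> D2 \<and> predim scale ex W D1 = 0"
proof -
  obtain z where z: "set z = S" using finite_list assms(1) by blast
  obtain w where "set w \<subseteq> D2" "predim scale ex (set (z @ w)) D1 = 0" using h2(7)[of z] z assms(2) by blast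
  then show ?thesis using z assms by (intro exI[of _ "set (z @ w)"]) auto
qed
lemma pa3: assumes "finite S" "S \<subseteq> D3" shows "\<exists>W. finite W \<and> S \<subseteq> W \<and> W \<subseteq> D3 \<and> predim scale ex W D1 = 0"
proof -
  obtain z where z: "set z = S" using finite_list assms(1) by blast
  obtain w where "set w \<subseteq> D3" "predim scale ex (set (z @ w)) D1 = 0" using h3(7)[of z] z assms(2) by blast
  then show ?thesis using z assms by (intro exI[of _ "set (z @ w)"]) auto
qed

lemma D23: "D2 \<inter> D3 \<subseteq> D1" using p2(2) p3(2) fa(1) D1V1 by blast
lemma D2_D4: "D2 \<subseteq> D4"
proof
  fix x assume "x \<in> D2" then show "x \<in> D4" unfolding fa(3) setsum_iff
    using Q.subspace_0[OF p3(3)] by (intro bexI[of _ x] bexI[of _ 0]) auto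
qed
lemma D3_D4: "D3 \<subseteq> D4"
proof
  fix x assume "x \<in> D3" then show "x \<in> D4" unfolding fa(3) setsum_iff
    using Q.subspace_0[OF p2(3)] by (intro bexI[of _ 0] bexI[of _ x]) auto
qed

lemma F4: "subfield F4" unfolding fa(5) by (rule subfield_gen_field)
lemma F2F4: "F2 \<subseteq> F4" unfolding fa(5) using gen_field_sup[of "F2 \<union> F3"] by blast
lemma F3F4: "F3 \<subseteq> F4" unfolding fa(5) using gen_field_sup[of "F2 \<union> F3"] by blast

lemma pk4: "pkpf scale ex V4 D4 F4"
  unfolding pkpf_def
proof (intro conjI ballI)
  show "K.subspace V4" unfolding fa(2) by (rule subspace_setsum[OF VS p2(1) p3(1)])
  show "D4 \<subseteq> V4" using p2(2) p3(2) unfolding fa(2,3) setsum_def by blast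
  show "Q.subspace D4" unfolding fa(3) by (rule subspace_setsum[OF vs_qscale[OF VS] p2(3) p3(3)])
  show "K.span D4 = V4"
  proof
    have "D4 \<subseteq> V4" using p2(2) p3(2) unfolding fa(2,3) setsum_def by blast
    moreover have "K.subspace V4" unfolding fa(2) by (rule subspace_setsum[OF VS p2(1) p3(1)])
    ultimately show "K.span D4 \<subseteq> V4" using K.span_minimal by blast
    show "V4 \<subseteq> K.span D4"
    proof
      fix x assume "x \<in> V4"
      then obtain a b where ab: "a \<in> V2" "b \<in> V3" "x = a + b" unfolding fa(2) setsum_iff by blast
      have "a \<in> K.span D4" using ab(1) p2(4) K.span_mono[OF D2_D4] by blast
      moreover have "b \<in> K.span D4" using ab(2) p3(4) K.span_mono[OF D3_D4] by blast
      ultimately show "x \<in> K.span D4" using ab(3) K.span_add by blast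
    qed
  qed
  show "subfield F4" by (rule F4)
  fix x assume "x \<in> D4"
  then obtain a b where ab: "a \<in> D2" "b \<in> D3" "x = a + b" unfolding fa(3) setsum_iff by blast
  have exx: "ex x = ex a * ex b" using ab fa(6) by simp
  have "ex a \<in> F4" "ex b \<in> F4" using p2(6)[OF ab(1)] p3(6)[OF ab(2)] F2F4 F3F4 by auto
  then show "ex x \<in> F4" using exx sf_mult[OF F4] by simp
  show "ex x \<noteq> 0" using exx p2(7)[OF ab(1)] p3(7)[OF ab(2)] by simp
  fix y assume "y \<in> D4"
  then obtain a' b' where ab': "a' \<in> D2" "b' \<in> D3" "y = a' + b'" unfolding fa(3) setsum_iff by blast
  have "x + y = (a + a') + (b + b')" using ab ab' by (simp add: algebra_simps)
  moreover have "a + a' \<in> D2" "b + b' \<in> D3" using ab ab' Q.subspace_add[OF p2(3)] Q.subspace_add[OF p3(3)] by auto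
  ultimately have "ex (x + y) = ex (a + a') * ex (b + b')" using fa(6) by simp
  also have "\<dots> = (ex a * ex a') * (ex b * ex b')" using p2(8)[OF ab(1) ab'(1)] p3(8)[OF ab(2) ab'(2)] by simp
  also have "\<dots> = ex x * ex y" using exx ab' fa(6) by (simp add: mult_ac)
  finally show "ex (x + y) = ex x * ex y" .
next
  show "gen_field (ex ` D4) = F4"
  proof
    have "ex ` D4 \<subseteq> F4"
    proof
      fix u assume "u \<in> ex ` D4"
      then obtain x where x: "x \<in> D4" "u = ex x" by blast
      then obtain a b where ab: "a \<in> D2" "b \<in> D3" "x = a + b" unfolding fa(3) setsum_iff by blast
      have "ex a \<in> F4" "ex b \<in> F4" using p2(6)[OF ab(1)] p3(6)[OF ab(2)] F2F4 F3F4 by auto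
      then show "u \<in> F4" using x ab fa(6) sf_mult[OF F4] by simp
    qed
    then show "gen_field (ex ` D4) \<subseteq> F4" by (rule gen_field_least[OF F4])
    have "ex ` D2 \<subseteq> ex ` D4" using D2_D4 by (rule image_mono)
    then have "F2 \<subseteq> gen_field (ex ` D4)" using p2(9) gen_field_mono[of "ex ` D2" "ex ` D4"] by simp
    moreover have "ex ` D3 \<subseteq> ex ` D4" using D3_D4 by (rule image_mono)
    then have "F3 \<subseteq> gen_field (ex ` D4)" using p3(9) gen_field_mono[of "ex ` D3" "ex ` D4"] by simp
    ultimately have "F2 \<union> F3 \<subseteq> gen_field (ex ` D4)" by blast
    then show "F4 \<subseteq> gen_field (ex ` D4)" unfolding fa(5) by (rule gen_field_least[OF subfield_gen_field])
  qed
qed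

end



lemma (in pregeom) rk_sandwich:
  assumes "B1 \<subseteq> B" "B \<subseteq> B2" "finite A" "rk cl A B2 = rk cl A B1"
  shows "rk cl A B = rk cl A B1"
  using rk_base_mono[OF assms(1,3)] rk_base_mono[OF assms(2,3)] assms(4) by simp

lemma acl_gen: "gen_field S \<subseteq> acl S"
  unfolding acl_def using algebraic_self[OF subfield_gen_field] by blast

context amalg begin
interpretation K: vector_space scale by (rule VS)
interpretation Q: vector_space "qscale scale" by (rule vs_qscale[OF VS])
interpretation PK: pregeom K.span by (rule pregeom_span[OF VS])
interpretation PQ: pregeom Q.span by (rule pregeom_span[OF vs_qscale[OF VS]])
interpretation PT: pregeom acl by (rule pregeom_acl)

lemma HD2: "hom_dom scale ex D2" by (rule p2(10))
lemma HD3: "hom_dom scale ex D3" by (rule p3(10))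
lemma HD4: "hom_dom scale ex D4" by (rule pkpf_unf(10)[OF pk4])

lemma D1D4: "D1 \<subseteq> D4" using h2(3) D2_D4 by blast
lemma F1F4: "F1 \<subseteq> F4" using h2(4) F2F4 by blast
lemma V1V4: "V1 \<subseteq> V4"
proof
  fix x assume "x \<in> V1"
  then show "x \<in> V4" unfolding fa(2) setsum_iff using h2(2) K.subspace_0[OF p3(1)]
    by (intro bexI[of _ x] bexI[of _ 0]) auto
qed

lemma kp4: "kernel_preserving ex D1 D4"
  unfolding kernel_preserving_def
proof (intro subsetI, elim CollectE conjE)
  fix x assume x: "x \<in> D4" "ex x = 1"
  then obtain a b where ab: "a \<in> D2" "b \<in> D3" "x = a + b" unfolding fa(3) setsum_iff by blast
  have prod1: "ex a * ex b = 1" using x ab fa(6) by simp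
  have ea: "ex a = inverse (ex b)" using prod1 inverse_unique[of "ex b" "ex a"] by (simp add: mult.commute)
  have "ex a \<in> F3" using ea p3(6)[OF ab(2)] sf_inverse[OF p3(5)] by simp
  then have "ex a \<in> F1" using LD_inter[OF p1(5) p2(5) p3(5) fa(4) p2(6)[OF ab(1)]] by blast
  moreover have "ex a \<noteq> 0" using p2(7)[OF ab(1)] .
  ultimately have "ex a \<in> ex ` D1" using exD1 by blast
  then obtain d where d: "d \<in> D1" "ex d = ex a" by (metis imageE)
  have d2: "d \<in> D2" and d3: "d \<in> D3" using d(1) h2(3) h3(3) by auto
  have "ex (a - d) = 1" using ex_diff[OF VS HD2 ab(1) d2] d(2) p2(7)[OF ab(1)] by simp
  moreover have "a - d \<in> D2" using hd_diff[OF VS HD2 ab(1) d2] .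
  ultimately have "a - d \<in> D1" using h2(5) unfolding kernel_preserving_def by blast
  then have aD1: "a \<in> D1" using Q.subspace_add[OF p1(3) _ d(1), of "a - d"] by simp
  have "ex (b + d) = ex b * ex d" using hd_add[OF VS HD3 ab(2) d3] .
  then have "ex (b + d) = 1" using d(2) prod1 by (simp add: mult.commute)
  moreover have "b + d \<in> D3" using hd_addD[OF VS HD3 ab(2) d3] .
  ultimately have "b + d \<in> D1" using h3(5) unfolding kernel_preserving_def by blast
  then have bD1: "b \<in> D1" using Q.subspace_diff[OF p1(3) _ d(1), of "b + d"] by simp
  show "x \<in> D1" using ab(3) aD1 bD1 Q.subspace_add[OF p1(3)] by simp
qed

lemma TK: "finite A \<Longrightarrow> A \<subseteq> V3 \<Longrightarrow> rk K.span A V2 = rk K.span A D1"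
  using span_transfer[OF VS p1(1) p2(1) p3(1) h2(2) _ _ _] fa(1) D1V1 by simp

lemma TQ: "finite A \<Longrightarrow> A \<subseteq> D3 \<Longrightarrow> rk Q.span A D2 = rk Q.span A D1"
  using span_transfer[OF vs_qscale[OF VS] p1(3) p2(3) p3(3) h2(3) D23] by simp

lemma TT:
  assumes fS: "finite S" and S3: "S \<subseteq> F3"
  shows "rk acl S (ex ` D2) = rk acl S (ex ` D1)"
proof -
  have le: "rk acl S (ex ` D2) \<le> rk acl S (ex ` D1)"
    using PT.rk_base_mono[OF image_mono[OF h2(3)] fS] .
  obtain C where C: "C \<subseteq> S" "finite C" "card C = rk acl S (ex ` D2)" "S \<subseteq> acl (C \<union> ex ` D2)"
    using PT.rk_witness[OF fS] by blast
  define E where "E = gen_field (C \<union> ex ` D1)"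
  have E: "subfield E" unfolding E_def by (rule subfield_gen_field)
  have F1E: "F1 \<subseteq> E" unfolding E_def using p1(9) gen_field_mono[of "ex ` D1" "C \<union> ex ` D1"] by auto
  have "C \<union> ex ` D1 \<subseteq> F3" using C(1) S3 p1(6) h3(4) by blast
  then have EF3: "E \<subseteq> F3" unfolding E_def by (rule gen_field_least[OF p3(5)])
  have "S \<subseteq> acl (C \<union> ex ` D1)"
  proof
    fix s assume sS: "s \<in> S"
    have "algebraic_over (gen_field (C \<union> ex ` D2)) s" using C(4) sS unfolding acl_def by blast
    moreover have "gen_field (C \<union> ex ` D2) \<subseteq> gen_field (F2 \<union> E)"
    proof (rule gen_field_mono)
      have "C \<subseteq> E" unfolding E_def using gen_field_sup[of "C \<union> ex ` D1"] by blast
      moreover have "ex ` D2 \<subseteq> F2" using p2(6) by blast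
      ultimately show "C \<union> ex ` D2 \<subseteq> F2 \<union> E" by blast
    qed
    ultimately have "algebraic_over (gen_field (F2 \<union> E)) s" using algebraic_over_mono by blast
    then have "algebraic_over E s" using LD_core[OF p1(5) p2(5) E p3(5) F1E EF3 fa(4)] sS S3 by blast
    then show "s \<in> acl (C \<union> ex ` D1)" unfolding acl_def E_def by simp
  qed
  then have "rk acl S (ex ` D1) \<le> card C" using PT.rk_le[OF C(1,2)] by blast
  then show ?thesis using le C(3) by simp
qed

lemma decomp: "Z \<subseteq> D4 \<Longrightarrow> \<exists>cf ef. \<forall>z\<in>Z. cf z \<in> D2 \<and> ef z \<in> D3 \<and> z = cf z + ef z"
proof -
  assume Z: "Z \<subseteq> D4"
  have "\<forall>z\<in>Z. \<exists>ce. fst ce \<in> D2 \<and> snd ce \<in> D3 \<and> z = fst ce + snd ce"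
  proof
    fix z assume "z \<in> Z"
    then have "z \<in> D4" using Z by blast
    then obtain a b where "a \<in> D2" "b \<in> D3" "z = a + b" unfolding fa(3) setsum_iff by blast
    then show "\<exists>ce. fst ce \<in> D2 \<and> snd ce \<in> D3 \<and> z = fst ce + snd ce" by (intro exI[of _ "(a, b)"]) simp
  qed
  then obtain ce where "\<forall>z\<in>Z. fst (ce z) \<in> D2 \<and> snd (ce z) \<in> D3 \<and> z = fst (ce z) + snd (ce z)"
    by (rule bchoice[THEN exE]) blast
  then show ?thesis by (intro exI[of _ "\<lambda>z. fst (ce z)"] exI[of _ "\<lambda>z. snd (ce z)"]) simp
qed


lemma ex_sum_acl:
  assumes "c \<in> D2" "e \<in> D3" "ex c \<in> gen_field GX" "ex e \<in> gen_field GX"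
  shows "ex (c + e) \<in> acl GX"
proof -
  have "ex (c + e) \<in> gen_field GX" using assms fa(6) sf_mult[OF subfield_gen_field] by simp
  then show ?thesis using acl_gen by blast
qed

lemma strong4:
  assumes fZ: "finite Z" and ZD4: "Z \<subseteq> D4"
  shows "predim scale ex Z D1 \<ge> 0"
proof -
  obtain cf ef where ce: "\<And>z. z \<in> Z \<Longrightarrow> cf z \<in> D2" "\<And>z. z \<in> Z \<Longrightarrow> ef z \<in> D3"
      "\<And>z. z \<in> Z \<Longrightarrow> z = cf z + ef z"
    using decomp[OF ZD4] by blast
  define E where "E = ef ` Z"
  have fE: "finite E" unfolding E_def using fZ by simp
  have ED3: "E \<subseteq> D3" unfolding E_def using ce(2) by blast
  define X2 where "X2 = D2 \<inter> Q.span (Z \<union> D1)"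
  obtain x2 where x2: "finite x2" "x2 \<subseteq> X2" "X2 \<subseteq> Q.span (x2 \<union> D1)"
    using PQ.finite_basis_sub[OF fZ, of X2 D1] unfolding X2_def by blast
  have x2D2: "x2 \<subseteq> D2" using x2(2) unfolding X2_def by blast
  have x2Q: "x2 \<subseteq> Q.span (Z \<union> D1)" using x2(2) unfolding X2_def by blast
  have fx2Z: "finite (x2 \<union> Z)" using x2(1) fZ by simp
  have Zsub: "Z \<subseteq> Z \<union> D1" by blast
  have eK: "rk K.span Z D1 = rk K.span (x2 \<union> Z) D1"
  proof (rule PK.rk_cong[OF fZ fx2Z])
    show "Z \<subseteq> K.span ((x2 \<union> Z) \<union> D1)" using K.span_superset[of "(x2 \<union> Z) \<union> D1"] by blast
    have "x2 \<subseteq> K.span (Z \<union> D1)" using x2Q spanQ_sub_spanK[OF VS, of "Z \<union> D1"] by blast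
    then show "x2 \<union> Z \<subseteq> K.span (Z \<union> D1)" using K.span_superset[of "Z \<union> D1"] by blast
  qed
  have eQ: "rk Q.span Z D1 = rk Q.span (x2 \<union> Z) D1"
  proof (rule PQ.rk_cong[OF fZ fx2Z])
    show "Z \<subseteq> Q.span ((x2 \<union> Z) \<union> D1)" using Q.span_superset[of "(x2 \<union> Z) \<union> D1"] by blast
    show "x2 \<union> Z \<subseteq> Q.span (Z \<union> D1)" using x2Q Q.span_superset[of "Z \<union> D1"] by blast
  qed
  have eT: "rk acl (ex ` Z) (ex ` D1) = rk acl (ex ` (x2 \<union> Z)) (ex ` D1)"
  proof (rule PT.rk_cong)
    show "finite (ex ` Z)" "finite (ex ` (x2 \<union> Z))" using fZ fx2Z by auto
    show "ex ` Z \<subseteq> acl (ex ` (x2 \<union> Z) \<union> ex ` D1)" using PT.cl_ext[of "ex ` (x2 \<union> Z) \<union> ex ` D1"] by blast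
    have ZD1: "Z \<union> D1 \<subseteq> D4" using ZD4 D1D4 by blast
    have "ex ` x2 \<subseteq> acl (ex ` (Z \<union> D1))"
      using x2Q ex_span_acl[OF VS HD4 ZD1] by blast
    then show "ex ` (x2 \<union> Z) \<subseteq> acl (ex ` Z \<union> ex ` D1)"
      using PT.cl_ext[of "ex ` Z \<union> ex ` D1"] by (auto simp: image_Un)
  qed
  have cK: "rk K.span (x2 \<union> Z) D1 = rk K.span x2 D1 + rk K.span Z (x2 \<union> D1)"
    using PK.rk_chain[OF x2(1) fZ] .
  have cQ: "rk Q.span (x2 \<union> Z) D1 = rk Q.span x2 D1 + rk Q.span Z (x2 \<union> D1)"
    using PQ.rk_chain[OF x2(1) fZ] .
  have cT: "rk acl (ex ` (x2 \<union> Z)) (ex ` D1) = rk acl (ex ` x2) (ex ` D1) + rk acl (ex ` Z) (ex ` (x2 \<union> D1))"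
    using PT.rk_chain[of "ex ` x2" "ex ` Z" "ex ` D1"] x2(1) fZ by (simp add: image_Un)
  have s2: "predim scale ex x2 D1 \<ge> 0" using strong2[OF x2(1) x2D2] .
  have s3: "predim scale ex E D1 \<ge> 0" using strong3[OF fE ED3] .
  have x2D1V2: "x2 \<union> D1 \<subseteq> V2" using x2D2 h2(3) p2(2) by blast
  have ZcongK: "rk K.span Z V2 = rk K.span E V2"
  proof (rule PK.rk_cong[OF fZ fE])
    show "Z \<subseteq> K.span (E \<union> V2)"
    proof
      fix z assume z: "z \<in> Z"
      have "cf z \<in> K.span (E \<union> V2)" using ce(1)[OF z] p2(2) K.span_base[of "cf z" "E \<union> V2"] by blast
      moreover have "ef z \<in> K.span (E \<union> V2)" using z K.span_base[of "ef z" "E \<union> V2"] unfolding E_def by blast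
      ultimately show "z \<in> K.span (E \<union> V2)" using ce(3)[OF z] K.span_add by metis
    qed
    show "E \<subseteq> K.span (Z \<union> V2)"
    proof
      fix e assume "e \<in> E"
      then obtain z where z: "z \<in> Z" "e = ef z" unfolding E_def by blast
      have "cf z \<in> K.span (Z \<union> V2)" using ce(1)[OF z(1)] p2(2) K.span_base[of "cf z" "Z \<union> V2"] by blast
      moreover have "z \<in> K.span (Z \<union> V2)" using z K.span_base[of z "Z \<union> V2"] by blast
      ultimately have "z - cf z \<in> K.span (Z \<union> V2)" using K.span_diff by blast
      moreover have "z - cf z = e" using ce(3)[OF z(1)] z(2) by (simp add: algebra_simps)
      ultimately show "e \<in> K.span (Z \<union> V2)" by simp
    qed
  qed
  have iK: "rk K.span Z (x2 \<union> D1) \<ge> rk K.span E D1"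
  proof -
    have "rk K.span Z V2 \<le> rk K.span Z (x2 \<union> D1)" by (rule PK.rk_base_mono[OF x2D1V2 fZ])
    moreover have "rk K.span E V2 = rk K.span E D1" using TK[OF fE] ED3 p3(2) by blast
    ultimately show ?thesis using ZcongK by simp
  qed
  have ZcongQ: "rk Q.span Z D2 = rk Q.span E D2"
  proof (rule PQ.rk_cong[OF fZ fE])
    show "Z \<subseteq> Q.span (E \<union> D2)"
    proof
      fix z assume z: "z \<in> Z"
      have "cf z \<in> Q.span (E \<union> D2)" using ce(1)[OF z] Q.span_base[of "cf z" "E \<union> D2"] by blast
      moreover have "ef z \<in> Q.span (E \<union> D2)" using z Q.span_base[of "ef z" "E \<union> D2"] unfolding E_def by blast
      ultimately show "z \<in> Q.span (E \<union> D2)" using ce(3)[OF z] Q.span_add by metis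
    qed
    show "E \<subseteq> Q.span (Z \<union> D2)"
    proof
      fix e assume "e \<in> E"
      then obtain z where z: "z \<in> Z" "e = ef z" unfolding E_def by blast
      have "cf z \<in> Q.span (Z \<union> D2)" using ce(1)[OF z(1)] Q.span_base[of "cf z" "Z \<union> D2"] by blast
      moreover have "z \<in> Q.span (Z \<union> D2)" using z Q.span_base[of z "Z \<union> D2"] by blast
      ultimately have "z - cf z \<in> Q.span (Z \<union> D2)" using Q.span_diff by blast
      moreover have "z - cf z = e" using ce(3)[OF z(1)] z(2) by (simp add: algebra_simps)
      ultimately show "e \<in> Q.span (Z \<union> D2)" by simp
    qed
  qed
  have iQ: "rk Q.span Z (x2 \<union> D1) \<le> rk Q.span E D1"
  proof -
    obtain C where C: "C \<subseteq> Z" "finite C" "card C = rk Q.span Z D2" "Z \<subseteq> Q.span (C \<union> D2)"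
      using PQ.rk_witness[OF fZ] by blast
    have "Z \<subseteq> Q.span (C \<union> (x2 \<union> D1))"
    proof
      fix x assume xZ: "x \<in> Z"
      then have "x \<in> Q.span (C \<union> D2)" using C(4) by blast
      then obtain a b where ab: "x = a + b" "a \<in> Q.span C" "b \<in> Q.span D2" unfolding Q.span_Un by blast
      have bD2: "b \<in> D2" using ab(3) Q.span_minimal[of D2 D2] p2(3) by blast
      have "x \<in> Q.span (Z \<union> D1)" using xZ Q.span_base[of x "Z \<union> D1"] by blast
      moreover have "a \<in> Q.span (Z \<union> D1)" using ab(2) Q.span_mono[of C "Z \<union> D1"] C(1) by blast
      ultimately have "x - a \<in> Q.span (Z \<union> D1)" using Q.span_diff by blast
      moreover have "x - a = b" using ab(1) by simp
      ultimately have "b \<in> X2" using bD2 unfolding X2_def by simp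
      then have "b \<in> Q.span (x2 \<union> D1)" using x2(3) by blast
      then have "b \<in> Q.span (C \<union> (x2 \<union> D1))" using Q.span_mono[of "x2 \<union> D1" "C \<union> (x2 \<union> D1)"] by blast
      moreover have "a \<in> Q.span (C \<union> (x2 \<union> D1))" using ab(2) Q.span_mono[of C "C \<union> (x2 \<union> D1)"] by blast
      ultimately show "x \<in> Q.span (C \<union> (x2 \<union> D1))" using ab(1) Q.span_add by metis
    qed
    then have "rk Q.span Z (x2 \<union> D1) \<le> card C" using PQ.rk_le[OF C(1,2)] by blast
    moreover have "rk Q.span E D2 = rk Q.span E D1" using TQ[OF fE ED3] .
    ultimately show ?thesis using C(3) ZcongQ by simp
  qed
  have ZcongT: "rk acl (ex ` Z) (ex ` D2) = rk acl (ex ` E) (ex ` D2)"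
  proof (rule PT.rk_cong)
    show "finite (ex ` Z)" "finite (ex ` E)" using fZ fE by auto
    show "ex ` Z \<subseteq> acl (ex ` E \<union> ex ` D2)"
    proof
      fix u assume "u \<in> ex ` Z"
      then obtain z where z: "z \<in> Z" "u = ex z" by blast
      have "ex (cf z) \<in> gen_field (ex ` E \<union> ex ` D2)"
        using ce(1)[OF z(1)] gen_field_sup[of "ex ` E \<union> ex ` D2"] by blast
      moreover have "ex (ef z) \<in> gen_field (ex ` E \<union> ex ` D2)"
        using z(1) gen_field_sup[of "ex ` E \<union> ex ` D2"] unfolding E_def by blast
      ultimately show "u \<in> acl (ex ` E \<union> ex ` D2)" using ex_sum_acl[OF ce(1,2)[OF z(1)]] ce(3)[OF z(1)] z(2) by metis
    qed
    show "ex ` E \<subseteq> acl (ex ` Z \<union> ex ` D2)"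
    proof
      fix u assume "u \<in> ex ` E"
      then obtain z where z: "z \<in> Z" "u = ex (ef z)" unfolding E_def by blast
      let ?G = "gen_field (ex ` Z \<union> ex ` D2)"
      have "ex (cf z) \<in> ?G" using ce(1)[OF z(1)] gen_field_sup[of "ex ` Z \<union> ex ` D2"] by blast
      moreover have "ex z \<in> ?G" using z(1) gen_field_sup[of "ex ` Z \<union> ex ` D2"] by blast
      ultimately have "ex z / ex (cf z) \<in> ?G" using sf_divide[OF subfield_gen_field] by blast
      moreover have "ex z = ex (cf z) * ex (ef z)" using fa(6)[OF ce(1,2)[OF z(1)]] ce(3)[OF z(1)] by simp
      ultimately have "ex (ef z) \<in> ?G" using p2(7)[OF ce(1)[OF z(1)]] by simp
      then show "u \<in> acl (ex ` Z \<union> ex ` D2)" using acl_gen z(2) by blast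
    qed
  qed
  have iT: "rk acl (ex ` Z) (ex ` (x2 \<union> D1)) \<ge> rk acl (ex ` E) (ex ` D1)"
  proof -
    have "ex ` (x2 \<union> D1) \<subseteq> ex ` D2" using x2D2 h2(3) by blast
    then have "rk acl (ex ` Z) (ex ` D2) \<le> rk acl (ex ` Z) (ex ` (x2 \<union> D1))"
      using PT.rk_base_mono fZ by blast
    moreover have "rk acl (ex ` E) (ex ` D2) = rk acl (ex ` E) (ex ` D1)"
      using TT fE ED3 p3(6) by blast
    ultimately show ?thesis using ZcongT by simp
  qed
  have "predim scale ex Z D1 = predim scale ex x2 D1 +
      (int (rk K.span Z (x2 \<union> D1)) + int (rk acl (ex ` Z) (ex ` (x2 \<union> D1))) - int (rk Q.span Z (x2 \<union> D1)))"
    unfolding predim_eq eK eQ eT cK cQ cT by simp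
  moreover have "predim scale ex E D1 = int (rk K.span E D1) + int (rk acl (ex ` E) (ex ` D1)) - int (rk Q.span E D1)"
    by (rule predim_eq)
  ultimately show ?thesis using s2 s3 iK iQ iT by linarith
qed


lemma pa4:
  assumes fZ: "finite Z" and ZD4: "Z \<subseteq> D4"
  shows "\<exists>W. finite W \<and> Z \<subseteq> W \<and> W \<subseteq> D4 \<and> predim scale ex W D1 = 0"
proof -
  obtain cf ef where ce: "\<And>z. z \<in> Z \<Longrightarrow> cf z \<in> D2" "\<And>z. z \<in> Z \<Longrightarrow> ef z \<in> D3"
      "\<And>z. z \<in> Z \<Longrightarrow> z = cf z + ef z"
    using decomp[OF ZD4] by blast
  obtain W2 where W2: "finite W2" "cf ` Z \<subseteq> W2" "W2 \<subseteq> D2" "predim scale ex W2 D1 = 0"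
    using pa2[of "cf ` Z"] fZ ce(1) by blast
  obtain W3 where W3: "finite W3" "ef ` Z \<subseteq> W3" "W3 \<subseteq> D3" "predim scale ex W3 D1 = 0"
    using pa3[of "ef ` Z"] fZ ce(2) by blast
  define W where "W = Z \<union> (W2 \<union> W3)"
  have fW: "finite W" "finite (W2 \<union> W3)" unfolding W_def using fZ W2(1) W3(1) by auto
  have WD4: "W \<subseteq> D4" unfolding W_def using ZD4 W2(3) W3(3) D2_D4 D3_D4 by blast
  have eK: "rk K.span W D1 = rk K.span (W2 \<union> W3) D1"
  proof (rule PK.rk_cong[OF fW])
    show "W \<subseteq> K.span ((W2 \<union> W3) \<union> D1)"
    proof
      fix x assume "x \<in> W"
      then consider "x \<in> Z" | "x \<in> W2 \<union> W3" unfolding W_def by blast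
      then show "x \<in> K.span ((W2 \<union> W3) \<union> D1)"
      proof cases
        case 1
        have "cf x \<in> K.span ((W2 \<union> W3) \<union> D1)" using W2(2) 1 K.span_base[of "cf x" "(W2 \<union> W3) \<union> D1"] by blast
        moreover have "ef x \<in> K.span ((W2 \<union> W3) \<union> D1)" using W3(2) 1 K.span_base[of "ef x" "(W2 \<union> W3) \<union> D1"] by blast
        ultimately show ?thesis using ce(3)[OF 1] K.span_add by metis
      next
        case 2 then show ?thesis using K.span_base[of x "(W2 \<union> W3) \<union> D1"] by blast
      qed
    qed
    show "W2 \<union> W3 \<subseteq> K.span (W \<union> D1)" unfolding W_def using K.span_superset[of "Z \<union> (W2 \<union> W3) \<union> D1"] by blast
  qed
  have eQ: "rk Q.span W D1 = rk Q.span (W2 \<union> W3) D1"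
  proof (rule PQ.rk_cong[OF fW])
    show "W \<subseteq> Q.span ((W2 \<union> W3) \<union> D1)"
    proof
      fix x assume "x \<in> W"
      then consider "x \<in> Z" | "x \<in> W2 \<union> W3" unfolding W_def by blast
      then show "x \<in> Q.span ((W2 \<union> W3) \<union> D1)"
      proof cases
        case 1
        have "cf x \<in> Q.span ((W2 \<union> W3) \<union> D1)" using W2(2) 1 Q.span_base[of "cf x" "(W2 \<union> W3) \<union> D1"] by blast
        moreover have "ef x \<in> Q.span ((W2 \<union> W3) \<union> D1)" using W3(2) 1 Q.span_base[of "ef x" "(W2 \<union> W3) \<union> D1"] by blast
        ultimately show ?thesis using ce(3)[OF 1] Q.span_add by metis
      next
        case 2 then show ?thesis using Q.span_base[of x "(W2 \<union> W3) \<union> D1"] by blast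
      qed
    qed
    show "W2 \<union> W3 \<subseteq> Q.span (W \<union> D1)" unfolding W_def using Q.span_superset[of "Z \<union> (W2 \<union> W3) \<union> D1"] by blast
  qed
  have eT: "rk acl (ex ` W) (ex ` D1) = rk acl (ex ` (W2 \<union> W3)) (ex ` D1)"
  proof (rule PT.rk_cong)
    show "finite (ex ` W)" "finite (ex ` (W2 \<union> W3))" using fW by auto
    show "ex ` W \<subseteq> acl (ex ` (W2 \<union> W3) \<union> ex ` D1)"
    proof
      fix u assume "u \<in> ex ` W"
      then obtain x where x: "x \<in> W" "u = ex x" by blast
      let ?X = "ex ` (W2 \<union> W3) \<union> ex ` D1"
      from x(1) consider "x \<in> Z" | "x \<in> W2 \<union> W3" unfolding W_def by blast
      then show "u \<in> acl ?X"
      proof cases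
        case 1
        have "ex (cf x) \<in> gen_field ?X" using W2(2) 1 gen_field_sup[of ?X] by blast
        moreover have "ex (ef x) \<in> gen_field ?X" using W3(2) 1 gen_field_sup[of ?X] by blast
        ultimately show ?thesis using ex_sum_acl[OF ce(1,2)[OF 1]] ce(3)[OF 1] x(2) by metis
      next
        case 2 then show ?thesis using x(2) PT.cl_ext[of ?X] by blast
      qed
    qed
    show "ex ` (W2 \<union> W3) \<subseteq> acl (ex ` W \<union> ex ` D1)"
      unfolding W_def using PT.cl_ext[of "ex ` (Z \<union> (W2 \<union> W3)) \<union> ex ` D1"] by blast
  qed
  have cK: "rk K.span (W2 \<union> W3) D1 = rk K.span W2 D1 + rk K.span W3 (W2 \<union> D1)"
    using PK.rk_chain[OF W2(1) W3(1)] .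
  have cQ: "rk Q.span (W2 \<union> W3) D1 = rk Q.span W2 D1 + rk Q.span W3 (W2 \<union> D1)"
    using PQ.rk_chain[OF W2(1) W3(1)] .
  have cT: "rk acl (ex ` (W2 \<union> W3)) (ex ` D1) = rk acl (ex ` W2) (ex ` D1) + rk acl (ex ` W3) (ex ` (W2 \<union> D1))"
    using PT.rk_chain[of "ex ` W2" "ex ` W3" "ex ` D1"] W2(1) W3(1) by (simp add: image_Un)
  have sK: "rk K.span W3 (W2 \<union> D1) = rk K.span W3 D1"
  proof (rule PK.rk_sandwich[of D1 _ V2])
    show "D1 \<subseteq> W2 \<union> D1" by blast
    show "W2 \<union> D1 \<subseteq> V2" using W2(3) h2(3) p2(2) by blast
    show "finite W3" by (rule W3(1))
    have "W3 \<subseteq> V3" using W3(3) p3(2) by blast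
    then show "rk K.span W3 V2 = rk K.span W3 D1" using TK[OF W3(1)] by simp
  qed
  have sQ: "rk Q.span W3 (W2 \<union> D1) = rk Q.span W3 D1"
  proof (rule PQ.rk_sandwich[of D1 _ D2])
    show "D1 \<subseteq> W2 \<union> D1" by blast
    show "W2 \<union> D1 \<subseteq> D2" using W2(3) h2(3) by blast
    show "finite W3" by (rule W3(1))
    show "rk Q.span W3 D2 = rk Q.span W3 D1" using TQ[OF W3(1) W3(3)] .
  qed
  have sT: "rk acl (ex ` W3) (ex ` (W2 \<union> D1)) = rk acl (ex ` W3) (ex ` D1)"
  proof (rule PT.rk_sandwich[of "ex ` D1" _ "ex ` D2"])
    show "ex ` D1 \<subseteq> ex ` (W2 \<union> D1)" by blast
    show "ex ` (W2 \<union> D1) \<subseteq> ex ` D2" using W2(3) h2(3) by blast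
    show "finite (ex ` W3)" using W3(1) by simp
    show "rk acl (ex ` W3) (ex ` D2) = rk acl (ex ` W3) (ex ` D1)"
    proof (rule TT)
      show "finite (ex ` W3)" using W3(1) by simp
      show "ex ` W3 \<subseteq> F3" using W3(3) p3(6) by blast
    qed
  qed
  have "predim scale ex W D1 = predim scale ex W2 D1 + predim scale ex W3 D1"
    unfolding predim_eq eK eQ eT cK cQ cT sK sQ sT by simp
  then have "predim scale ex W D1 = 0" using W2(4) W3(4) by simp
  moreover have "Z \<subseteq> W" unfolding W_def by blast
  ultimately show ?thesis using fW(1) WD4 by (intro exI[of _ W]) simp
qed

theorem main: "powers_algebraic_ext scale ex V1 D1 F1 V4 D4 F4"
  unfolding powers_algebraic_ext_def strong_ext_def kpf_ext_def
proof (intro conjI allI impI)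
  show "pkpf scale ex V1 D1 F1" by (rule pk1)
  show "pkpf scale ex V4 D4 F4" by (rule pk4)
  show "V1 \<subseteq> V4" by (rule V1V4)
  show "D1 \<subseteq> D4" by (rule D1D4)
  show "F1 \<subseteq> F4" by (rule F1F4)
  show "kernel_preserving ex D1 D4" by (rule kp4)
  fix z :: "'v list" assume z: "set z \<subseteq> D4"
  show "0 \<le> predim scale ex (set z) D1" using strong4[OF finite_set z] .
  obtain W where W: "finite W" "set z \<subseteq> W" "W \<subseteq> D4" "predim scale ex W D1 = 0"
    using pa4[OF finite_set z] by blast
  obtain w where w: "set w = W" using finite_list[OF W(1)] by blast
  have "set (z @ w) = W" using w W(2) by auto
  then show "\<exists>w. set w \<subseteq> D4 \<and> predim scale ex (set (z @ w)) D1 = 0"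
    using W w by (intro exI[of _ w]) auto
qed

end

theorem proposition5p7:
  fixes scale :: "'k::field_char_0 \<Rightarrow> 'v::ab_group_add \<Rightarrow> 'v"
    and ex :: "'v \<Rightarrow> 'f::field_char_0"
  assumes "vector_space scale"
    and "full_kpf scale ex V1 D1 F1"
    and "powers_algebraic_ext scale ex V1 D1 F1 V2 D2 F2"
    and "powers_algebraic_ext scale ex V1 D1 F1 V3 D3 F3"
    and "free_amalgam scale ex V1 D1 F1 V2 D2 F2 V3 D3 F3 V4 D4 F4"
  shows "powers_algebraic_ext scale ex V1 D1 F1 V4 D4 F4"
proof -
  interpret amalg scale ex V1 D1 F1 V2 D2 F2 V3 D3 F3 V4 D4 F4
    by (rule amalg.intro[OF assms])
  show ?thesis by (rule main)
qed


end
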